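(* Let $n\ge 3$ and let $(X,Y,Z)$ be a triple in $\mathfrak{so}(2,n)$ with $[X,Y]=Z$, $[X,Z]=[Y,Z]=0$ and $Z\neq 0$. If $Z\in\mathfrak{p}$, then $Z$ is a light-like translation of the Minkowski patch $M_{x_0}$; equivalently, there exists $p\in P$ with $\mathrm{Ad}(p)Z\in\mathfrak{g}_{\alpha+\beta}$.
   Context: Let $Q=2u_0u_{n+1}+2u_1u_n+u_2^2+\dots+u_{n-1}^2$ on $\mathbf{R}^{n+2}$, and let $\mathrm{Ein}^{1,n-1}=\mathbb{P}(\{Q=0\})$ be the Einstein universe with its conformally flat Lorentzian structure, whose conformal group is $G=\mathrm{PO}(2,n)$; identify $\mathfrak{so}(2,n)$ with the Lie algebra of conformal vector fields of $\mathrm{Ein}^{1,n-1}$. Let $x_0=[e_0]$, $P<G$ its stabilizer, $\mathfrak{p}$ its Lie algebra. The stereographic projection $s_{x_0}:\mathbf{R}^{1,n-1}\to\mathrm{Ein}^{1,n-1}$, $s_{x_0}(v)=[-\langle v,v\rangle/2:v_1:\dots:v_n:1]$ with $\langle v,v\rangle=2v_1v_n+v_2^2+\dots+v_{n-1}^2$, is a conformal diffeomorphism onto the open dense set $M_{x_0}$ (the Minkowski patch), conjugating $P$ to the affine conformal group $\mathrm{CO}(1,n-1)\ltimes\mathbf{R}^n$. An element $Z\in\mathfrak{so}(2,n)$ is a light-like translation of $M_{x_0}$ if $Z$ fixes $x_0$ and $s_{x_0}^*Z$ is the constant vector field given by a nonzero null vector of $\mathbf{R}^{1,n-1}$. In terms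 of the restricted roots $\alpha,\beta$ of the Cartan subalgebra $\{\mathrm{diag}(\lambda,\mu,0,\dots,0,-\mu,-\lambda)\}$, with $\alpha=\lambda$, $\beta=\mu$, the light-like translations form the $\mathrm{Ad}(P)$-orbit of $\mathfrak{g}_{\alpha+\beta}\setminus\{0\}$. *)

theory Defs
  imports Complex_Main
begin

text \<open>Matrices of size (n+2) x (n+2), indices 0..n+1, represented as
  functions nat => nat => real vanishing outside the index range.
  Vectors of R^{n+2} are nat => real (indices 0..n+1); vectors of
  Minkowski space R^{1,n-1} are nat => real (indices 1..n).\<close>

type_synonym mat = "nat \<Rightarrow> nat \<Rightarrow> real"

definition supported :: "nat \<Rightarrow> mat \<Rightarrow> bool" where
  "supported n A \<longleftrightarrow> (\<forall>i j. (n + 1 < i \<or> n + 1 < j) \<longrightarrow> A i j = 0)"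

definition mmul :: "nat \<Rightarrow> mat \<Rightarrow> mat \<Rightarrow> mat" where
  "mmul n A B = (\<lambda>i j. if i \<le> n + 1 \<and> j \<le> n + 1 then (\<Sum>k\<le>n+1. A i k * B k j) else 0)"

definition mtransp :: "mat \<Rightarrow> mat" where
  "mtransp A = (\<lambda>i j. A j i)"

definition idm :: "nat \<Rightarrow> mat" where
  "idm n = (\<lambda>i j. if i = j \<and> i \<le> n + 1 then 1 else 0)"

definition bracket :: "nat \<Rightarrow> mat \<Rightarrow> mat \<Rightarrow> mat" where
  "bracket n A B = (\<lambda>i j. mmul n A B i j - mmul n B A i j)"

text \<open>Gram matrix of Q = 2u_0u_{n+1} + 2u_1u_n + u_2^2 + ... + u_{n-1}^2.\<close>
definition Jm :: "nat \<Rightarrow> mat" where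
  "Jm n = (\<lambda>i j. if (i = 0 \<and> j = n + 1) \<or> (i = n + 1 \<and> j = 0) \<or> (i = 1 \<and> j = n) \<or> (i = n \<and> j = 1)
                     \<or> (2 \<le> i \<and> i \<le> n - 1 \<and> i = j) then 1 else 0)"

definition so2n :: "nat \<Rightarrow> mat set" where
  "so2n n = {A. supported n A \<and>
      (\<forall>i j. mmul n (mtransp A) (Jm n) i j + mmul n (Jm n) A i j = 0)}"

text \<open>The orthogonal group O(2,n) = O(Q) (matrix representatives of PO(2,n)).\<close>
definition O2n :: "nat \<Rightarrow> mat set" where
  "O2n n = {g. supported n g \<and> mmul n (mtransp g) (mmul n (Jm n) g) = Jm n}"

text \<open>Stabilizers of x_0 = [e_0]: P (group, via representatives in O(2,n)) and its Lie algebra p.\<close>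
definition Pgrp :: "nat \<Rightarrow> mat set" where
  "Pgrp n = {g \<in> O2n n. \<forall>i. 1 \<le> i \<and> i \<le> n + 1 \<longrightarrow> g i 0 = 0}"

definition palg :: "nat \<Rightarrow> mat set" where
  "palg n = {A \<in> so2n n. \<forall>i. 1 \<le> i \<and> i \<le> n + 1 \<longrightarrow> A i 0 = 0}"

definition cartanH :: "nat \<Rightarrow> real \<Rightarrow> real \<Rightarrow> mat" where
  "cartanH n l m = (\<lambda>i j. if i = j then (if i = 0 then l else if i = 1 then m
                                       else if i = n then - m else if i = n + 1 then - l else 0)
                         else 0)"

text \<open>Restricted root space g_{alpha+beta}, where alpha(H) = lambda, beta(H) = mu.\<close>
definition root_space_ab :: "nat \<Rightarrow> mat set" where
  "root_space_ab n = {Z \<in> so2n n. \<forall>l m. bracket n (cartanH n l m) Z = (\<lambda>i j. (l + m) * Z i j)}"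

definition mink :: "nat \<Rightarrow> (nat \<Rightarrow> real) \<Rightarrow> (nat \<Rightarrow> real) \<Rightarrow> real" where
  "mink n v w = v 1 * w n + v n * w 1 + (\<Sum>i\<in>{2..n-1}. v i * w i)"

definition stereo_lift :: "nat \<Rightarrow> (nat \<Rightarrow> real) \<Rightarrow> (nat \<Rightarrow> real)" where
  "stereo_lift n v = (\<lambda>i. if i = 0 then - mink n v v / 2 else if i \<le> n then v i
                          else if i = n + 1 then 1 else 0)"

definition mvec :: "nat \<Rightarrow> mat \<Rightarrow> (nat \<Rightarrow> real) \<Rightarrow> (nat \<Rightarrow> real)" where
  "mvec n A x = (\<lambda>i. if i \<le> n + 1 then (\<Sum>k\<le>n+1. A i k * x k) else 0)"

text \<open>Pull-back s^*Z at v: the conformal vector field of Z at [x] is Zx mod x;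
  writing Z s(v) = d(lift)_v(w) + c s(v) with d(lift)_v(w) = (-<v,w>, w, 0),
  one gets c = (Z s(v))_{n+1} and w_i = (Z s(v))_i - c v_i (1 <= i <= n).\<close>
definition pullback_field :: "nat \<Rightarrow> mat \<Rightarrow> (nat \<Rightarrow> real) \<Rightarrow> (nat \<Rightarrow> real)" where
  "pullback_field n Z v = (let x = mvec n Z (stereo_lift n v) in
       (\<lambda>i. if 1 \<le> i \<and> i \<le> n then x i - x (n + 1) * v i else 0))"

definition minkvec :: "nat \<Rightarrow> (nat \<Rightarrow> real) \<Rightarrow> bool" where
  "minkvec n v \<longleftrightarrow> (\<forall>i. (i = 0 \<or> n < i) \<longrightarrow> v i = 0)"

definition lightlike_translation :: "nat \<Rightarrow> mat \<Rightarrow> bool" where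
  "lightlike_translation n Z \<longleftrightarrow> Z \<in> palg n \<and>
     (\<exists>w. minkvec n w \<and> w \<noteq> (\<lambda>_. 0) \<and> mink n w w = 0 \<and>
          (\<forall>v. minkvec n v \<longrightarrow> pullback_field n Z v = w))"

end

theory Submission
  imports Defs "Jordan_Normal_Form.Schur_Decomposition"
begin


lemma sum_single:
  assumes "finite A" "a \<in> A" "\<And>x. x \<in> A \<Longrightarrow> x \<noteq> a \<Longrightarrow> g x = 0"
  shows "sum g A = g a"
proof -
  have "sum g A = g a + sum g (A - {a})" using assms by (simp add: sum.remove)
  also have "sum g (A - {a}) = 0" using assms by (intro sum.neutral) auto
  finally show ?thesis by simp
qed

lemma powsum_zero_set:
  fixes S :: "complex set"
  assumes "finite S" "0 \<notin> S" "\<forall>k>0. (\<Sum>v\<in>S. c v * v ^ k) = 0"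
  shows "\<forall>v\<in>S. c v = 0"
  using assms
proof (induction S arbitrary: c rule: finite_induct)
  case empty
  then show ?case by simp
next
  case (insert a S)
  have a0: "a \<noteq> 0" using insert by auto
  have h: "\<And>k. k > 0 \<Longrightarrow> c a * a ^ k + (\<Sum>v\<in>S. c v * v ^ k) = 0"
    using insert by (simp add: sum.insert)
  define c' where "c' v = c v * (v - a)" for v
  have "\<forall>k>0. (\<Sum>v\<in>S. c' v * v ^ k) = 0"
  proof (intro allI impI)
    fix k :: nat assume k: "k > 0"
    have "(\<Sum>v\<in>S. c' v * v ^ k) = (\<Sum>v\<in>S. c v * v ^ Suc k - a * (c v * v ^ k))"
      by (rule sum.cong) (auto simp: c'_def algebra_simps)
    also have "\<dots> = (\<Sum>v\<in>S. c v * v ^ Suc k) - a * (\<Sum>v\<in>S. c v * v ^ k)"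
      by (simp add: sum_subtractf sum_distrib_left)
    also have "\<dots> = (- (c a * a ^ Suc k)) - a * (- (c a * a ^ k))"
    proof -
      have e1: "(\<Sum>v\<in>S. c v * v ^ Suc k) = - (c a * a ^ Suc k)"
        using h[of "Suc k"] by (metis add.commute eq_neg_iff_add_eq_0 zero_less_Suc)
      have e2: "(\<Sum>v\<in>S. c v * v ^ k) = - (c a * a ^ k)"
        using h[of k] k by (metis add.commute eq_neg_iff_add_eq_0)
      show ?thesis by (simp only: e1 e2)
    qed
    also have "\<dots> = 0" by (simp add: algebra_simps)
    finally show "(\<Sum>v\<in>S. c' v * v ^ k) = 0" .
  qed
  then have "\<forall>v\<in>S. c' v = 0" using insert by auto
  then have cS: "\<forall>v\<in>S. c v = 0" using insert unfolding c'_def by auto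
  have "c a * a = 0" using h[of 1] cS by simp
  then have "c a = 0" using a0 by simp
  then show ?case using cS by simp
qed

lemma sum_list_count_c:
  fixes f :: "'a \<Rightarrow> complex"
  shows "sum_list (map f xs) = (\<Sum>x\<in>set xs. of_nat (count_list xs x) * f x)"
proof (induction xs)
  case Nil then show ?case by simp
next
  case (Cons x xs)
  have "(\<Sum>v\<in>set (x # xs). of_nat (count_list (x # xs) v) * f v)
      = (\<Sum>v\<in>insert x (set xs). of_nat (count_list xs v) * f v + (if v = x then f v else 0))"
    by (rule sum.cong) (auto simp: algebra_simps)
  also have "\<dots> = (\<Sum>v\<in>insert x (set xs). of_nat (count_list xs v) * f v) + f x"
    by (simp add: sum.distrib sum.delta')
  also have "(\<Sum>v\<in>insert x (set xs). of_nat (count_list xs v) * f v) = (\<Sum>v\<in>set xs. of_nat (count_list xs v) * f v)"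
    by (cases "x \<in> set xs") (auto simp: sum.insert count_list_0_iff insert_absorb)
  finally show ?case using Cons by simp
qed

lemma powsum_zero_list:
  fixes es :: "complex list"
  assumes "\<forall>k>0. sum_list (map (\<lambda>x. x ^ k) es) = 0"
  shows "\<forall>x\<in>set es. x = 0"
proof -
  let ?S = "set es - {0}"
  let ?c = "\<lambda>v. of_nat (count_list es v) :: complex"
  have "\<forall>k>0. (\<Sum>v\<in>?S. ?c v * v ^ k) = 0"
  proof (intro allI impI)
    fix k :: nat assume k: "k > 0"
    have "sum_list (map (\<lambda>x. x ^ k) es) = (\<Sum>v\<in>set es. ?c v * v ^ k)"
      by (rule sum_list_count_c)
    also have "\<dots> = (\<Sum>v\<in>?S. ?c v * v ^ k)"
      using k by (intro sum.mono_neutral_right) auto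
    finally show "(\<Sum>v\<in>?S. ?c v * v ^ k) = 0" using assms k by simp
  qed
  then have "\<forall>v\<in>?S. ?c v = 0" by (intro powsum_zero_set) auto
  then show ?thesis by (auto simp: count_list_0_iff)
qed

definition ctr :: "'a::comm_ring_1 Matrix.mat \<Rightarrow> 'a" where
  "ctr A = (\<Sum>i<dim_row A. A $$ (i,i))"

lemma ctr_comm:
  assumes "A \<in> carrier_mat n m" "B \<in> carrier_mat m n"
  shows "ctr (A * B) = ctr (B * A)"
proof -
  have "ctr (A * B) = (\<Sum>i<n. \<Sum>k<m. A $$ (i,k) * B $$ (k,i))"
    using assms by (simp add: ctr_def scalar_prod_def atLeast0LessThan)
  also have "\<dots> = (\<Sum>k<m. \<Sum>i<n. B $$ (k,i) * A $$ (i,k))"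
    by (subst sum.swap) (simp add: mult.commute)
  also have "\<dots> = ctr (B * A)"
    using assms by (simp add: ctr_def scalar_prod_def atLeast0LessThan)
  finally show ?thesis .
qed

lemma upper_mult:
  assumes A: "A \<in> carrier_mat n n" and B: "B \<in> carrier_mat n n"
    and uA: "upper_triangular A" and uB: "upper_triangular B"
  shows "upper_triangular (A * B) \<and> (\<forall>i<n. (A * B) $$ (i,i) = A $$ (i,i) * B $$ (i,i))"
proof
  show "upper_triangular (A * B)"
  proof
    fix i j assume ji: "j < i" and i: "i < dim_row (A * B)"
    have "(A * B) $$ (i,j) = (\<Sum>k<n. A $$ (i,k) * B $$ (k,j))"
      using A B i ji by (simp add: scalar_prod_def atLeast0LessThan)
    also have "\<dots> = 0"
    proof (rule sum.neutral, intro ballI)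
      fix k assume k: "k \<in> {..<n}"
      show "A $$ (i,k) * B $$ (k,j) = 0"
      proof (cases "k < i")
        case True then have "A $$ (i,k) = 0" using uA A i by (intro upper_triangularD) auto
        then show ?thesis by simp
      next
        case False then have "j < k" using ji by auto
        then have "B $$ (k,j) = 0" using uB B k by (intro upper_triangularD) auto
        then show ?thesis by simp
      qed
    qed
    finally show "(A * B) $$ (i,j) = 0" .
  qed
next
  show "\<forall>i<n. (A * B) $$ (i,i) = A $$ (i,i) * B $$ (i,i)"
  proof (intro allI impI)
    fix i assume i: "i < n"
    have "(A * B) $$ (i,i) = (\<Sum>k<n. A $$ (i,k) * B $$ (k,i))"
      using A B i by (simp add: scalar_prod_def atLeast0LessThan)
    also have "\<dots> = A $$ (i,i) * B $$ (i,i)"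
    proof (rule sum_single)
      fix k assume k: "k \<in> {..<n}" "k \<noteq> i"
      show "A $$ (i,k) * B $$ (k,i) = 0"
      proof (cases "k < i")
        case True then have "A $$ (i,k) = 0" using uA A i by (intro upper_triangularD) auto
        then show ?thesis by simp
      next
        case False then have "i < k" using k by auto
        then have "B $$ (k,i) = 0" using uB B k by (intro upper_triangularD) auto
        then show ?thesis by simp
      qed
    qed (use i in auto)
    finally show "(A * B) $$ (i,i) = A $$ (i,i) * B $$ (i,i)" .
  qed
qed

lemma upper_pow:
  assumes B: "B \<in> carrier_mat n n" and uB: "upper_triangular B"
  shows "upper_triangular (B ^\<^sub>m k) \<and> (\<forall>i<n. (B ^\<^sub>m k) $$ (i,i) = (B $$ (i,i)) ^ k)"
proof (induction k)
  case 0
  then show ?case using B by auto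
next
  case (Suc k)
  have c: "B ^\<^sub>m k \<in> carrier_mat n n" using B by simp
  from upper_mult[OF c B _ uB] Suc show ?case by (simp add: power_Suc2 del: power_Suc)
qed

lemma strict_upper_pow:
  assumes B: "B \<in> carrier_mat n n" and uB: "upper_triangular B"
    and d: "\<forall>i<n. B $$ (i,i) = 0"
  shows "\<forall>i<n. \<forall>j<n. j < i + k \<longrightarrow> (B ^\<^sub>m k) $$ (i,j) = 0"
proof (induction k)
  case 0
  then show ?case using B by auto
next
  case (Suc k)
  show ?case
  proof (intro allI impI)
    fix i j assume i: "i < n" and j: "j < n" and ji: "j < i + Suc k"
    have c: "B ^\<^sub>m k \<in> carrier_mat n n" using B by simp
    have "(B ^\<^sub>m Suc k) $$ (i,j) = (\<Sum>l<n. (B ^\<^sub>m k) $$ (i,l) * B $$ (l,j))"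
      using c B i j by (simp add: scalar_prod_def atLeast0LessThan)
    also have "\<dots> = 0"
    proof (rule sum.neutral, intro ballI)
      fix l assume l: "l \<in> {..<n}"
      show "(B ^\<^sub>m k) $$ (i,l) * B $$ (l,j) = 0"
      proof (cases "l < i + k")
        case True then show ?thesis using Suc i l by auto
      next
        case False
        then have "j \<le> l" using ji by auto
        then have "B $$ (l,j) = 0" using uB B d l j
          by (cases "j = l") auto
        then show ?thesis by simp
      qed
    qed
    finally show "(B ^\<^sub>m Suc k) $$ (i,j) = 0" .
  qed
qed

lemma nilpotent_from_traces:
  fixes A :: "complex Matrix.mat"
  assumes A: "A \<in> carrier_mat n n"
    and tr: "\<forall>k>0. ctr (A ^\<^sub>m k) = 0"
  shows "A ^\<^sub>m n = 0\<^sub>m n n"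
proof -
  obtain es where es: "char_poly A = (\<Prod>a\<leftarrow>es. [:- a, 1:])" "length es = n"
    using char_poly_factorized[OF A] by blast
  obtain B P Q where sd: "schur_decomposition A es = (B,P,Q)" by (cases "schur_decomposition A es") auto
  from schur_decomposition[OF A es(1) sd]
  have sim: "similar_mat_wit A B P Q" and uB: "upper_triangular B" and dg: "diag_mat B = es"
    by auto
  from sim A have B: "B \<in> carrier_mat n n" and P: "P \<in> carrier_mat n n" and Q: "Q \<in> carrier_mat n n"
    and QP: "Q * P = 1\<^sub>m n"
    unfolding similar_mat_wit_def Let_def by auto
  have trB: "ctr (B ^\<^sub>m k) = ctr (A ^\<^sub>m k)" for k
  proof -
    have Bk: "B ^\<^sub>m k \<in> carrier_mat n n" using B by simp
    have "A ^\<^sub>m k = P * (B ^\<^sub>m k) * Q" using similar_mat_wit_pow_id[OF sim] .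
    then have "ctr (A ^\<^sub>m k) = ctr (Q * (P * (B ^\<^sub>m k)))"
      using ctr_comm[of "P * (B ^\<^sub>m k)" n n Q] P Q Bk by simp
    also have "Q * (P * (B ^\<^sub>m k)) = (Q * P) * (B ^\<^sub>m k)"
      using P Q Bk by (simp add: assoc_mult_mat)
    also have "\<dots> = B ^\<^sub>m k" using QP Bk by (simp add: left_mult_one_mat)
    finally show ?thesis by simp
  qed
  have "\<forall>k>0. sum_list (map (\<lambda>x. x ^ k) es) = 0"
  proof (intro allI impI)
    fix k :: nat assume k: "k > 0"
    have "sum_list (map (\<lambda>x. x ^ k) es) = (\<Sum>i<n. (B $$ (i,i)) ^ k)"
      using dg[symmetric] B by (simp add: diag_mat_def sum_list_sum_nth atLeast0LessThan)
    also have "\<dots> = ctr (B ^\<^sub>m k)"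
      using upper_pow[OF B uB, of k] B by (simp add: ctr_def)
    also have "\<dots> = 0" using trB tr k by simp
    finally show "sum_list (map (\<lambda>x. x ^ k) es) = 0" .
  qed
  then have z: "\<forall>x\<in>set es. x = 0" by (rule powsum_zero_list)
  have d: "\<forall>i<n. B $$ (i,i) = 0"
  proof (intro allI impI)
    fix i assume "i < n"
    then have "B $$ (i,i) \<in> set es" using dg[symmetric] B by (auto simp: diag_mat_def)
    then show "B $$ (i,i) = 0" using z by auto
  qed
  have Bn: "B ^\<^sub>m n = 0\<^sub>m n n"
    using strict_upper_pow[OF B uB d, of n] B by (intro eq_matI) auto
  have "A ^\<^sub>m n = P * (B ^\<^sub>m n) * Q" using similar_mat_wit_pow_id[OF sim] .
  also have "\<dots> = 0\<^sub>m n n" using Bn P Q by simp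
  finally show ?thesis .
qed


hide_type (open) Matrix.mat


declare sum.atMost_Suc[simp del]

definition sv :: "nat \<Rightarrow> (nat \<Rightarrow> real) \<Rightarrow> bool" where
  "sv n u \<longleftrightarrow> (\<forall>i. n + 1 < i \<longrightarrow> u i = 0)"

definition Bf :: "nat \<Rightarrow> (nat \<Rightarrow> real) \<Rightarrow> (nat \<Rightarrow> real) \<Rightarrow> real" where
  "Bf n u v = u 0 * v (n+1) + u (n+1) * v 0 + mink n u v"

definition e0 :: "nat \<Rightarrow> real" where "e0 = (\<lambda>i. if i = 0 then 1 else 0)"
definition fv :: "nat \<Rightarrow> nat \<Rightarrow> real" where "fv n = (\<lambda>i. if i = n + 1 then 1 else 0)"
definition unit :: "nat \<Rightarrow> nat \<Rightarrow> real" where "unit j = (\<lambda>i. if i = j then 1 else 0)"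
definition Wp :: "nat \<Rightarrow> (nat \<Rightarrow> real) \<Rightarrow> nat \<Rightarrow> real" where
  "Wp n u = (\<lambda>i. if 1 \<le> i \<and> i \<le> n then u i else 0)"

lemma mvec_add: "mvec n A (\<lambda>i. u i + v i) = (\<lambda>i. mvec n A u i + mvec n A v i)"
  by (auto simp: mvec_def sum.distrib algebra_simps)

lemma mvec_scale: "mvec n A (\<lambda>i. c * u i) = (\<lambda>i. c * mvec n A u i)"
  by (auto simp: mvec_def sum_distrib_left algebra_simps)

lemma mvec_diff: "mvec n A (\<lambda>i. u i - v i) = (\<lambda>i. mvec n A u i - mvec n A v i)"
  by (auto simp: mvec_def sum_subtractf algebra_simps)

lemma mvec_zero: "mvec n A (\<lambda>i. 0) = (\<lambda>i. 0)"
  by (auto simp: mvec_def)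

lemma mvec_lin2: "mvec n A (\<lambda>i. a * u i + b * v i) = (\<lambda>i. a * mvec n A u i + b * mvec n A v i)"
  by (auto simp: mvec_def sum.distrib sum_distrib_left algebra_simps)

lemma mvec_sv: "sv n (mvec n A u)"
  by (auto simp: sv_def mvec_def)

lemma mvec_cong: "(\<And>i. i \<le> n + 1 \<Longrightarrow> u i = v i) \<Longrightarrow> mvec n A u = mvec n A v"
  by (auto simp: mvec_def intro!: sum.cong)

lemma mvec_mmul: "mvec n (mmul n A B) u = mvec n A (mvec n B u)"
proof
  fix i show "mvec n (mmul n A B) u i = mvec n A (mvec n B u) i"
  proof (cases "i \<le> n + 1")
    case True
    have "mvec n (mmul n A B) u i = (\<Sum>k\<le>n+1. (\<Sum>l\<le>n+1. A i l * B l k) * u k)"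
      using True by (auto simp: mvec_def mmul_def intro!: sum.cong)
    also have "\<dots> = (\<Sum>k\<le>n+1. \<Sum>l\<le>n+1. A i l * B l k * u k)"
      by (simp only: sum_distrib_right)
    also have "\<dots> = (\<Sum>l\<le>n+1. \<Sum>k\<le>n+1. A i l * B l k * u k)"
      by (rule sum.swap)
    also have "\<dots> = (\<Sum>l\<le>n+1. A i l * (\<Sum>k\<le>n+1. B l k * u k))"
      by (simp only: sum_distrib_left mult.assoc)
    also have "\<dots> = mvec n A (mvec n B u) i"
      using True by (auto simp: mvec_def intro!: sum.cong)
    finally show ?thesis .
  qed (simp add: mvec_def)
qed

lemma mmul_assoc: "mmul n (mmul n A B) C = mmul n A (mmul n B C)"
proof (intro ext)
  fix i j show "mmul n (mmul n A B) C i j = mmul n A (mmul n B C) i j"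
  proof (cases "i \<le> n + 1 \<and> j \<le> n + 1")
    case True
    have "mmul n (mmul n A B) C i j = (\<Sum>k\<le>n+1. (\<Sum>l\<le>n+1. A i l * B l k) * C k j)"
      using True by (auto simp: mmul_def intro!: sum.cong)
    also have "\<dots> = (\<Sum>k\<le>n+1. \<Sum>l\<le>n+1. A i l * B l k * C k j)"
      by (simp only: sum_distrib_right)
    also have "\<dots> = (\<Sum>l\<le>n+1. \<Sum>k\<le>n+1. A i l * B l k * C k j)"
      by (rule sum.swap)
    also have "\<dots> = (\<Sum>l\<le>n+1. A i l * (\<Sum>k\<le>n+1. B l k * C k j))"
      by (simp only: sum_distrib_left mult.assoc)
    also have "\<dots> = mmul n A (mmul n B C) i j"
      using True by (auto simp: mmul_def intro!: sum.cong)
    finally show ?thesis .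
  qed (auto simp: mmul_def)
qed

lemma mvec_bracket: "mvec n (bracket n X Y) u = (\<lambda>i. mvec n X (mvec n Y u) i - mvec n Y (mvec n X u) i)"
proof -
  have "mvec n (bracket n X Y) u = (\<lambda>i. mvec n (mmul n X Y) u i - mvec n (mmul n Y X) u i)"
    by (auto simp: mvec_def bracket_def sum_subtractf left_diff_distrib)
  then show ?thesis by (simp add: mvec_mmul)
qed

definition sig :: "nat \<Rightarrow> nat \<Rightarrow> nat" where
  "sig n i = (if i = 0 then n + 1 else if i = n + 1 then 0 else if i = 1 then n else if i = n then 1 else i)"

lemma Jm_sig: "3 \<le> n \<Longrightarrow> i \<le> n + 1 \<Longrightarrow> j \<le> n + 1 \<Longrightarrow> Jm n i j = (if j = sig n i then 1 else 0)"
  by (auto simp: Jm_def sig_def)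

lemma sig_le: "3 \<le> n \<Longrightarrow> i \<le> n + 1 \<Longrightarrow> sig n i \<le> n + 1"
  by (auto simp: sig_def)

lemma Jsum: "3 \<le> n \<Longrightarrow> i \<le> n + 1 \<Longrightarrow> (\<Sum>j\<le>n+1. Jm n i j * v j) = v (sig n i)"
proof -
  assume n: "3 \<le> n" and i: "i \<le> n + 1"
  have "(\<Sum>j\<le>n+1. Jm n i j * v j) = Jm n i (sig n i) * v (sig n i)"
    by (rule sum_single) (use n i sig_le[OF n i] Jm_sig[OF n i] in auto)
  then show ?thesis using Jm_sig[OF n i sig_le[OF n i]] by simp
qed

lemma Jsum': "3 \<le> n \<Longrightarrow> j \<le> n + 1 \<Longrightarrow> (\<Sum>i\<le>n+1. u i * Jm n i j) = u (sig n j)"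
proof -
  assume n: "3 \<le> n" and j: "j \<le> n + 1"
  have s: "sig n (sig n j) = j" using n j by (auto simp: sig_def)
  have "(\<Sum>i\<le>n+1. u i * Jm n i j) = u (sig n j) * Jm n (sig n j) j"
    by (rule sum_single) (use n j sig_le[OF n j] s in \<open>auto simp: Jm_sig sig_def split: if_splits\<close>)
  then show ?thesis using Jm_sig[OF n sig_le[OF n j] j] s by simp
qed

lemma split_idx:
  fixes n :: nat
  assumes n: "3 \<le> n"
  shows "(\<Sum>i\<le>n+1. g i) = g 0 + g 1 + g n + g (n+1) + (\<Sum>i\<in>{2..n-1}. g i)"
proof -
  have e: "{..n+1} = insert 0 (insert 1 (insert n (insert (n+1) {2..n-1})))"
    using n by auto
  show ?thesis unfolding e using n by (simp add: add.assoc)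
qed

lemma Bf_sum: assumes n: "3 \<le> n"
  shows "Bf n u v = (\<Sum>i\<le>n+1. u i * (\<Sum>j\<le>n+1. Jm n i j * v j))"
proof -
  have "(\<Sum>i\<le>n+1. u i * (\<Sum>j\<le>n+1. Jm n i j * v j)) = (\<Sum>i\<le>n+1. u i * v (sig n i))"
    by (rule sum.cong) (use n Jsum in auto)
  also have "\<dots> = u 0 * v (n+1) + u 1 * v n + u n * v 1 + u (n+1) * v 0 + (\<Sum>i\<in>{2..n-1}. u i * v i)"
  proof -
    have "(\<Sum>i\<in>{2..n-1}. u i * v (sig n i)) = (\<Sum>i\<in>{2..n-1}. u i * v i)"
      by (rule sum.cong) (auto simp: sig_def)
    then show ?thesis using split_idx[OF n, of "\<lambda>i. u i * v (sig n i)"] n by (simp add: sig_def)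
  qed
  finally show ?thesis by (simp add: Bf_def mink_def)
qed

lemma mink_sym: "mink n u v = mink n v u"
  by (simp add: mink_def algebra_simps)

lemma mink_lin: "mink n (\<lambda>i. a * u i + b * v i) w = a * mink n u w + b * mink n v w"
  by (simp add: mink_def algebra_simps sum.distrib sum_distrib_left)

lemma mink_lin2: "mink n w (\<lambda>i. a * u i + b * v i) = a * mink n w u + b * mink n w v"
  by (simp add: mink_def algebra_simps sum.distrib sum_distrib_left)

lemma mink_scale: "mink n (\<lambda>i. a * u i) w = a * mink n u w"
  by (simp add: mink_def algebra_simps sum_distrib_left)

lemma mink_scale2: "mink n w (\<lambda>i. a * u i) = a * mink n w u"
  by (simp add: mink_def algebra_simps sum_distrib_left)

lemma mink_add: "mink n (\<lambda>i. u i + v i) w = mink n u w + mink n v w"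
  by (simp add: mink_def algebra_simps sum.distrib)

lemma mink_add2: "mink n w (\<lambda>i. u i + v i) = mink n w u + mink n w v"
  by (simp add: mink_def algebra_simps sum.distrib)

lemma mink_diff: "mink n (\<lambda>i. u i - v i) w = mink n u w - mink n v w"
  by (simp add: mink_def algebra_simps sum_subtractf)

lemma mink_diff2: "mink n w (\<lambda>i. u i - v i) = mink n w u - mink n w v"
  by (simp add: mink_def algebra_simps sum_subtractf)

lemma mink_zero: "mink n (\<lambda>i. 0) w = 0" "mink n w (\<lambda>i. 0) = 0"
  by (simp_all add: mink_def)

lemma mink_cong: "3 \<le> n \<Longrightarrow> (\<And>i. 1 \<le> i \<Longrightarrow> i \<le> n \<Longrightarrow> u i = u' i) \<Longrightarrow> mink n u w = mink n u' w"
  by (auto simp: mink_def intro!: sum.cong)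

lemma mink_Wp: "3 \<le> n \<Longrightarrow> mink n (Wp n u) w = mink n u w"
  by (rule mink_cong) (auto simp: Wp_def)

lemma mink_Wp2: "3 \<le> n \<Longrightarrow> mink n w (Wp n u) = mink n w u"
  using mink_Wp[of n u w] by (simp add: mink_sym)

lemma mink_e0: "3 \<le> n \<Longrightarrow> mink n e0 w = 0"
  by (subst mink_cong[of n e0 "\<lambda>i. 0"]) (auto simp: e0_def mink_zero)

lemma mink_fv: "3 \<le> n \<Longrightarrow> mink n (fv n) w = 0"
  by (subst mink_cong[of n "fv n" "\<lambda>i. 0"]) (auto simp: fv_def mink_zero)

lemma Bf_sym: "Bf n u v = Bf n v u"
  by (simp add: Bf_def mink_sym algebra_simps)

lemma Bf_lin: "Bf n (\<lambda>i. a * u i + b * v i) w = a * Bf n u w + b * Bf n v w"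
  by (simp add: Bf_def mink_lin algebra_simps)

lemma Bf_lin2: "Bf n w (\<lambda>i. a * u i + b * v i) = a * Bf n w u + b * Bf n w v"
  by (simp add: Bf_def mink_lin2 algebra_simps)

lemma Bf_e0: "3 \<le> n \<Longrightarrow> Bf n e0 v = v (n+1)"
  by (simp add: Bf_def mink_e0) (simp add: e0_def)

lemma Bf_e0': "3 \<le> n \<Longrightarrow> Bf n v e0 = v (n+1)"
  using Bf_e0 Bf_sym by metis

lemma Bf_fv: "3 \<le> n \<Longrightarrow> Bf n (fv n) v = v 0"
  by (simp add: Bf_def mink_fv) (simp add: fv_def)

lemma Bf_fv': "3 \<le> n \<Longrightarrow> Bf n v (fv n) = v 0"
  using Bf_fv Bf_sym by metis

lemma Bf_W: "minkvec n w \<Longrightarrow> Bf n w v = mink n w v" "minkvec n w \<Longrightarrow> Bf n v w = mink n v w"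
  by (auto simp: Bf_def minkvec_def)

lemma minkvec_Wp: "minkvec n (Wp n u)"
  by (auto simp: minkvec_def Wp_def)

lemma sv_decomp: "3 \<le> n \<Longrightarrow> sv n u \<Longrightarrow> u = (\<lambda>i. u 0 * e0 i + Wp n u i + u (n+1) * fv n i)"
  by (auto simp: sv_def e0_def Wp_def fv_def)

lemma sum_swap_lemma:
  fixes a :: "'i \<Rightarrow> 'k \<Rightarrow> real"
  shows "(\<Sum>i\<in>I. (\<Sum>k\<in>K. a i k * u k) * c i) = (\<Sum>k\<in>K. u k * (\<Sum>i\<in>I. a i k * c i))"
proof -
  have "(\<Sum>i\<in>I. (\<Sum>k\<in>K. a i k * u k) * c i) = (\<Sum>i\<in>I. \<Sum>k\<in>K. a i k * u k * c i)"
    by (simp only: sum_distrib_right)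
  also have "\<dots> = (\<Sum>i\<in>I. \<Sum>k\<in>K. u k * (a i k * c i))"
    by (intro sum.cong refl) (simp add: mult_ac)
  also have "\<dots> = (\<Sum>k\<in>K. \<Sum>i\<in>I. u k * (a i k * c i))" by (rule sum.swap)
  also have "\<dots> = (\<Sum>k\<in>K. u k * (\<Sum>i\<in>I. a i k * c i))" by (simp only: sum_distrib_left)
  finally show ?thesis .
qed

lemma Bf_mvec_left: assumes n: "3 \<le> n"
  shows "Bf n (mvec n A u) v = (\<Sum>k\<le>n+1. u k * (\<Sum>j\<le>n+1. (\<Sum>i\<le>n+1. A i k * Jm n i j) * v j))"
proof -
  have "Bf n (mvec n A u) v = (\<Sum>i\<le>n+1. (\<Sum>k\<le>n+1. A i k * u k) * (\<Sum>j\<le>n+1. Jm n i j * v j))"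
    unfolding Bf_sum[OF n] by (rule sum.cong) (auto simp: mvec_def)
  also have "\<dots> = (\<Sum>k\<le>n+1. u k * (\<Sum>i\<le>n+1. A i k * (\<Sum>j\<le>n+1. Jm n i j * v j)))"
    by (rule sum_swap_lemma)
  also have "\<dots> = (\<Sum>k\<le>n+1. u k * (\<Sum>j\<le>n+1. (\<Sum>i\<le>n+1. A i k * Jm n i j) * v j))"
  proof (rule sum.cong[OF refl])
    fix k
    have "(\<Sum>i\<le>n+1. A i k * (\<Sum>j\<le>n+1. Jm n i j * v j)) = (\<Sum>i\<le>n+1. \<Sum>j\<le>n+1. A i k * Jm n i j * v j)"
      by (simp only: sum_distrib_left mult.assoc)
    also have "\<dots> = (\<Sum>j\<le>n+1. \<Sum>i\<le>n+1. A i k * Jm n i j * v j)" by (rule sum.swap)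
    also have "\<dots> = (\<Sum>j\<le>n+1. (\<Sum>i\<le>n+1. A i k * Jm n i j) * v j)" by (simp only: sum_distrib_right)
    finally show "u k * (\<Sum>i\<le>n+1. A i k * (\<Sum>j\<le>n+1. Jm n i j * v j)) = u k * (\<Sum>j\<le>n+1. (\<Sum>i\<le>n+1. A i k * Jm n i j) * v j)"
      by simp
  qed
  finally show ?thesis .
qed

lemma Bf_mvec_right: assumes n: "3 \<le> n"
  shows "Bf n u (mvec n A v) = (\<Sum>k\<le>n+1. u k * (\<Sum>j\<le>n+1. (\<Sum>i\<le>n+1. Jm n k i * A i j) * v j))"
proof -
  have "Bf n u (mvec n A v) = (\<Sum>k\<le>n+1. u k * (\<Sum>i\<le>n+1. Jm n k i * (\<Sum>j\<le>n+1. A i j * v j)))"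
    unfolding Bf_sum[OF n] by (intro sum.cong refl arg_cong2[where f="(*)"]) (auto simp: mvec_def)
  also have "\<dots> = (\<Sum>k\<le>n+1. u k * (\<Sum>j\<le>n+1. (\<Sum>i\<le>n+1. Jm n k i * A i j) * v j))"
  proof (rule sum.cong[OF refl])
    fix k
    have "(\<Sum>i\<le>n+1. Jm n k i * (\<Sum>j\<le>n+1. A i j * v j)) = (\<Sum>i\<le>n+1. \<Sum>j\<le>n+1. Jm n k i * A i j * v j)"
      by (simp only: sum_distrib_left mult.assoc)
    also have "\<dots> = (\<Sum>j\<le>n+1. \<Sum>i\<le>n+1. Jm n k i * A i j * v j)" by (rule sum.swap)
    also have "\<dots> = (\<Sum>j\<le>n+1. (\<Sum>i\<le>n+1. Jm n k i * A i j) * v j)" by (simp only: sum_distrib_right)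
    finally show "u k * (\<Sum>i\<le>n+1. Jm n k i * (\<Sum>j\<le>n+1. A i j * v j)) = u k * (\<Sum>j\<le>n+1. (\<Sum>i\<le>n+1. Jm n k i * A i j) * v j)"
      by simp
  qed
  finally show ?thesis .
qed

lemma skew: assumes n: "3 \<le> n" and A: "A \<in> so2n n"
  shows "Bf n (mvec n A u) v = - Bf n u (mvec n A v)"
proof -
  have c: "(\<Sum>i\<le>n+1. A i k * Jm n i j) + (\<Sum>i\<le>n+1. Jm n k i * A i j) = 0"
    if "k \<le> n + 1" "j \<le> n + 1" for k j
  proof -
    have "mmul n (mtransp A) (Jm n) k j + mmul n (Jm n) A k j = 0" using A by (auto simp: so2n_def)
    then show ?thesis using that by (simp add: mmul_def mtransp_def)
  qed
  have ck: "(\<Sum>j\<le>n+1. (\<Sum>i\<le>n+1. A i k * Jm n i j) * v j) + (\<Sum>j\<le>n+1. (\<Sum>i\<le>n+1. Jm n k i * A i j) * v j) = 0"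
    if k: "k \<le> n + 1" for k
  proof -
    have "(\<Sum>j\<le>n+1. (\<Sum>i\<le>n+1. A i k * Jm n i j) * v j) + (\<Sum>j\<le>n+1. (\<Sum>i\<le>n+1. Jm n k i * A i j) * v j)
       = (\<Sum>j\<le>n+1. ((\<Sum>i\<le>n+1. A i k * Jm n i j) + (\<Sum>i\<le>n+1. Jm n k i * A i j)) * v j)"
      by (subst sum.distrib[symmetric]) (simp only: distrib_right)
    also have "\<dots> = 0" using c k by (intro sum.neutral) auto
    finally show ?thesis .
  qed
  have "Bf n (mvec n A u) v + Bf n u (mvec n A v) =
        (\<Sum>k\<le>n+1. u k * ((\<Sum>j\<le>n+1. (\<Sum>i\<le>n+1. A i k * Jm n i j) * v j) + (\<Sum>j\<le>n+1. (\<Sum>i\<le>n+1. Jm n k i * A i j) * v j)))"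
    unfolding Bf_mvec_left[OF n] Bf_mvec_right[OF n]
    by (subst sum.distrib[symmetric]) (simp only: distrib_left)
  also have "\<dots> = 0" using ck by (intro sum.neutral) auto
  finally show ?thesis by simp
qed

lemma mvec_unit: "i \<le> n + 1 \<Longrightarrow> j \<le> n + 1 \<Longrightarrow> mvec n A (unit j) i = A i j"
proof -
  assume i: "i \<le> n + 1" and j: "j \<le> n + 1"
  have "mvec n A (unit j) i = (\<Sum>k\<le>n+1. A i k * unit j k)" using i by (simp add: mvec_def)
  also have "\<dots> = A i j * unit j j" by (rule sum_single) (use j in \<open>auto simp: unit_def\<close>)
  finally show ?thesis by (simp add: unit_def)
qed

lemma sv_unit: "j \<le> n + 1 \<Longrightarrow> sv n (unit j)"
  by (auto simp: sv_def unit_def)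

lemma mat_eq_units:
  assumes "supported n A" "supported n B" "\<And>j. j \<le> n + 1 \<Longrightarrow> mvec n A (unit j) = mvec n B (unit j)"
  shows "A = B"
proof (intro ext)
  fix i j show "A i j = B i j"
  proof (cases "i \<le> n + 1 \<and> j \<le> n + 1")
    case True
    then show ?thesis using assms(3)[of j] mvec_unit[of i n j A] mvec_unit[of i n j B] by auto
  next
    case False then show ?thesis using assms(1,2) by (auto simp: supported_def)
  qed
qed

lemma Bf_unit_sum: assumes n: "3 \<le> n" and that: "k \<le> n + 1" "j \<le> n + 1"
  shows "(\<Sum>i\<le>n+1. A i k * Jm n i j) = Bf n (mvec n A (unit k)) (unit j)"
    and "(\<Sum>i\<le>n+1. Jm n k i * A i j) = Bf n (unit k) (mvec n A (unit j))"
proof -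
  have u: "(\<Sum>l\<le>n+1. unit k l * g l) = g k" for g :: "nat \<Rightarrow> real"
    by (subst sum_single[of _ k]) (use that in \<open>auto simp: unit_def\<close>)
  have u2: "(\<Sum>l\<le>n+1. g l * unit j l) = g j" for g :: "nat \<Rightarrow> real"
    by (subst sum_single[of _ j]) (use that in \<open>auto simp: unit_def\<close>)
  show "(\<Sum>i\<le>n+1. A i k * Jm n i j) = Bf n (mvec n A (unit k)) (unit j)"
    unfolding Bf_mvec_left[OF n] u u2 ..
  show "(\<Sum>i\<le>n+1. Jm n k i * A i j) = Bf n (unit k) (mvec n A (unit j))"
    unfolding Bf_mvec_right[OF n] u u2 ..
qed

lemma so2n_of_skew:
  assumes n: "3 \<le> n" and sA: "supported n A"
    and sk: "\<And>u v. sv n u \<Longrightarrow> sv n v \<Longrightarrow> Bf n (mvec n A u) v = - Bf n u (mvec n A v)"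
  shows "A \<in> so2n n"
  unfolding so2n_def
proof (intro CollectI conjI allI sA)
  fix k j
  show "mmul n (mtransp A) (Jm n) k j + mmul n (Jm n) A k j = 0"
  proof (cases "k \<le> n + 1 \<and> j \<le> n + 1")
    case True
    then have "mmul n (mtransp A) (Jm n) k j + mmul n (Jm n) A k j
        = Bf n (mvec n A (unit k)) (unit j) + Bf n (unit k) (mvec n A (unit j))"
      using Bf_unit_sum[OF n, of k j A] True by (simp add: mmul_def mtransp_def)
    also have "\<dots> = 0" using sk[of "unit k" "unit j"] True sv_unit by auto
    finally show ?thesis .
  qed (auto simp: mmul_def)
qed



lemma mid_zero:
  assumes n: "3 \<le> n" and d: "d n = 0" and dd: "mink n d d = 0"
  shows "\<forall>i\<in>{2..n-1}. d i = 0"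
proof -
  have "(\<Sum>i\<in>{2..n-1}. d i * d i) = 0" using dd d by (simp add: mink_def)
  then have "\<forall>i\<in>{2..n-1}. d i * d i = 0"
    by (subst (asm) sum_nonneg_eq_0_iff) auto
  then show ?thesis by auto
qed

lemma L1:
  assumes n: "3 \<le> n" and m1: "minkvec n w1" and m2: "minkvec n w2"
    and z1: "mink n w1 w1 = 0" and z2: "mink n w2 w2 = 0" and z12: "mink n w1 w2 = 0"
    and nz: "w1 \<noteq> (\<lambda>_. 0)"
  shows "\<exists>s. w2 = (\<lambda>i. s * w1 i)"
proof (cases "w1 n = 0")
  case False
  define s where "s = w2 n / w1 n"
  define d where "d = (\<lambda>i. w2 i - s * w1 i)"
  have dn: "d n = 0" using False by (simp add: d_def s_def)
  have dd: "mink n d d = 0"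
  proof -
    have "mink n d d = mink n w2 d - s * mink n w1 d"
      unfolding d_def by (simp add: mink_diff mink_scale)
    also have "\<dots> = 0" unfolding d_def using z1 z2 z12
      by (simp add: mink_diff2 mink_scale2 mink_sym[of n w2 w1])
    finally show ?thesis .
  qed
  have mid: "\<forall>i\<in>{2..n-1}. d i = 0" using mid_zero[OF n dn dd] .
  have "mink n d w1 = 0" unfolding d_def using z1 z12
    by (simp add: mink_diff mink_scale mink_sym[of n w2 w1])
  moreover have "mink n d w1 = d 1 * w1 n" using dn mid by (simp add: mink_def)
  ultimately have d1: "d 1 = 0" using False by simp
  have "d = (\<lambda>_. 0)"
  proof
    fix i show "d i = 0"
      using m1 m2 d1 dn mid n unfolding minkvec_def d_def
      by (cases "i = 0 \<or> n < i"; cases "i = 1"; cases "i = n") auto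
  qed
  then have "w2 = (\<lambda>i. s * w1 i)" unfolding d_def by (auto simp: fun_eq_iff dest: fun_cong)
  then show ?thesis by blast
next
  case True
  have mid1: "\<forall>i\<in>{2..n-1}. w1 i = 0" using mid_zero[OF n True z1] .
  have w11: "w1 1 \<noteq> 0"
  proof
    assume a: "w1 1 = 0"
    have "w1 = (\<lambda>_. 0)"
    proof
      fix i show "w1 i = 0"
        using m1 a True mid1 n unfolding minkvec_def
        by (cases "i = 0 \<or> n < i"; cases "i = 1"; cases "i = n") auto
    qed
    then show False using nz by simp
  qed
  have "mink n w1 w2 = w1 1 * w2 n" using True mid1 by (simp add: mink_def)
  then have w2n: "w2 n = 0" using z12 w11 by simp
  have mid2: "\<forall>i\<in>{2..n-1}. w2 i = 0" using mid_zero[OF n w2n z2] .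
  define s where "s = w2 1 / w1 1"
  have "w2 = (\<lambda>i. s * w1 i)"
  proof
    fix i show "w2 i = s * w1 i"
      using m1 m2 True w2n mid1 mid2 w11 n unfolding minkvec_def s_def
      by (cases "i = 0 \<or> n < i"; cases "i = 1"; cases "i = n") auto
  qed
  then show ?thesis by blast
qed

lemma mink_unit_n: "3 \<le> n \<Longrightarrow> mink n l (unit n) = l 1"
proof -
  assume n: "3 \<le> n"
  have "(\<Sum>i\<in>{2..n-1}. l i * unit n i) = 0" by (intro sum.neutral) (auto simp: unit_def)
  then show ?thesis using n by (simp add: mink_def unit_def)
qed

lemma mink_unit_1: "3 \<le> n \<Longrightarrow> mink n l (unit 1) = l n"
proof -
  assume n: "3 \<le> n"
  have "(\<Sum>i\<in>{2..n-1}. l i * unit 1 i) = 0" by (intro sum.neutral) (auto simp: unit_def)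
  then show ?thesis using n by (simp add: mink_def unit_def)
qed

lemma mink_unit_mid: "3 \<le> n \<Longrightarrow> i \<in> {2..n-1} \<Longrightarrow> mink n l (unit i) = l i"
proof -
  assume n: "3 \<le> n" and i: "i \<in> {2..n-1}"
  have "(\<Sum>j\<in>{2..n-1}. l j * unit i j) = l i * unit i i"
    by (rule sum_single) (use i in \<open>auto simp: unit_def\<close>)
  moreover have "unit i n = 0" "unit i 1 = 0" "unit i i = 1" using i n by (auto simp: unit_def)
  ultimately show ?thesis by (simp add: mink_def)
qed

lemma minkvec_unit: "1 \<le> i \<Longrightarrow> i \<le> n \<Longrightarrow> minkvec n (\<lambda>j. c * unit i j)"
  by (auto simp: minkvec_def unit_def)

lemma nondeg:
  assumes n: "3 \<le> n" and m: "minkvec n l" and nz: "l \<noteq> (\<lambda>_. 0)"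
  shows "\<exists>w0. minkvec n w0 \<and> mink n l w0 = 1"
proof -
  obtain i where li: "l i \<noteq> 0" using nz by auto
  have "\<not> (i = 0 \<or> n < i)" using li m unfolding minkvec_def by blast
  then have i: "1 \<le> i" "i \<le> n" by auto
  have key: "\<exists>w0. minkvec n w0 \<and> mink n l w0 = 1" if "mink n l (unit j) \<noteq> 0" "1 \<le> j" "j \<le> n" for j
  proof -
    define c where "c = 1 / mink n l (unit j)"
    have "minkvec n (\<lambda>k. c * unit j k)" using that by (intro minkvec_unit)
    moreover have "mink n l (\<lambda>k. c * unit j k) = c * mink n l (unit j)" by (rule mink_scale2)
    moreover have "c * mink n l (unit j) = 1" using that(1) by (simp add: c_def)
    ultimately show ?thesis by metis
  qed
  consider "i = 1" | "i = n" | "i \<in> {2..n-1}" using i n by force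
  then show ?thesis
  proof cases
    case 1
    then show ?thesis using key[of n] li n by (simp add: mink_unit_n)
  next
    case 2
    have "mink n l (unit 1) = l n" by (rule mink_unit_1[OF n])
    then show ?thesis using key[of 1] li n 2 by auto
  next
    case 3
    then show ?thesis using key[of i] li n i by (simp add: mink_unit_mid)
  qed
qed

locale skewop =
  fixes n :: nat and M :: "(nat \<Rightarrow> real) \<Rightarrow> nat \<Rightarrow> real"
  assumes n3: "3 \<le> n"
    and MW: "\<And>w. minkvec n w \<Longrightarrow> minkvec n (M w)"
    and Mlin: "\<And>a b u v. M (\<lambda>i. a * u i + b * v i) = (\<lambda>i. a * M u i + b * M v i)"
    and Msk: "\<And>w v. minkvec n w \<Longrightarrow> minkvec n v \<Longrightarrow> mink n (M w) v = - mink n w (M v)"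
begin

lemma Mscale: "M (\<lambda>i. a * u i) = (\<lambda>i. a * M u i)"
  using Mlin[of a u 0 u] by simp

lemma Madd: "M (\<lambda>i. u i + v i) = (\<lambda>i. M u i + M v i)"
  using Mlin[of 1 u 1 v] by simp

lemma Mdiff: "M (\<lambda>i. u i - v i) = (\<lambda>i. M u i - M v i)"
  using Mlin[of 1 u "-1" v] by simp

lemma Mzero: "M (\<lambda>i. 0) = (\<lambda>i. 0)"
  using Mscale[of 0 "\<lambda>i. 0"] by simp

lemma Mpow_W: "minkvec n w \<Longrightarrow> minkvec n ((M ^^ k) w)"
  by (induction k) (auto simp: MW)

lemma Mpow_zero: "(M ^^ k) (\<lambda>i. 0) = (\<lambda>i. 0)"
  by (induction k) (auto simp: Mzero)

lemma Mpow_scale: "(M ^^ k) (\<lambda>i. a * u i) = (\<lambda>i. a * (M ^^ k) u i)"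
  by (induction k) (auto simp: Mscale)

lemma Mpow_sk: "minkvec n w \<Longrightarrow> minkvec n v \<Longrightarrow> mink n ((M ^^ k) w) v = (-1) ^ k * mink n w ((M ^^ k) v)"
proof (induction k arbitrary: w v)
  case 0 then show ?case by simp
next
  case (Suc k)
  have "mink n ((M ^^ Suc k) w) v = mink n (M ((M ^^ k) w)) v" by simp
  also have "\<dots> = - mink n ((M ^^ k) w) (M v)" using Msk Mpow_W Suc.prems MW by auto
  also have "\<dots> = - ((-1) ^ k * mink n w ((M ^^ k) (M v)))" using Suc.IH[of w "M v"] Suc.prems MW by simp
  also have "(M ^^ k) (M v) = (M ^^ Suc k) v" by (simp add: funpow_Suc_right del: funpow.simps)
  finally show ?case by simp
qed

lemma sq0:
  assumes sq: "\<And>w. minkvec n w \<Longrightarrow> M (M w) = (\<lambda>_. 0)"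
  shows "\<And>w. minkvec n w \<Longrightarrow> M w = (\<lambda>_. 0)"
proof (rule ccontr)
  fix u0 assume u0: "minkvec n u0" and nz: "M u0 \<noteq> (\<lambda>_. 0)"
  define l where "l = M u0"
  have lW: "minkvec n l" using MW u0 l_def by simp
  have null: "mink n (M v) (M v) = 0" if "minkvec n v" for v
    using Msk[of v "M v"] sq[of v] that MW by (simp add: mink_zero)
  have ll: "mink n l l = 0" using null u0 l_def by simp
  obtain w0 where w0: "minkvec n w0" "mink n l w0 = 1" using nondeg[OF n3 lW] nz l_def by auto
  have par: "\<exists>s. M v = (\<lambda>i. s * l i)" if v: "minkvec n v" for v
  proof (rule L1[OF n3 lW MW[OF v] ll null[OF v]])
    show "mink n l (M v) = 0" using Msk[of u0 "M v"] u0 v MW sq[of v] l_def by (simp add: mink_zero)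
    show "l \<noteq> (\<lambda>_. 0)" using nz l_def by simp
  qed
  have "mink n (M w0) w0 = 0" using Msk[OF w0(1) w0(1)] by (simp add: mink_sym)
  obtain t where t: "M w0 = (\<lambda>i. t * l i)" using par w0 by blast
  then have "t = 0" using \<open>mink n (M w0) w0 = 0\<close> w0 by (simp add: mink_scale)
  then have Mw0: "M w0 = (\<lambda>_. 0)" using t by simp
  obtain s where s: "M u0 = (\<lambda>i. s * l i)" using par u0 by blast
  have "mink n (M u0) w0 = - mink n u0 (M w0)" using Msk u0 w0 by simp
  then have "s = 0" using s Mw0 w0 by (simp add: mink_scale mink_zero)
  then show False using s nz by simp
qed

lemma descend:
  assumes k: "4 \<le> k" and z: "\<And>w. minkvec n w \<Longrightarrow> (M ^^ k) w = (\<lambda>_. 0)"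
  shows "\<And>w. minkvec n w \<Longrightarrow> (M ^^ (k - 1)) w = (\<lambda>_. 0)"
proof -
  fix u assume u: "minkvec n u"
  have big: "(M ^^ (2*k - 4)) v = (\<lambda>_. 0)" if "minkvec n v" for v
  proof -
    have "2*k - 4 = (k - 4) + k" using k by simp
    then have "(M ^^ (2*k - 4)) v = (M ^^ (k - 4)) ((M ^^ k) v)" by (simp add: funpow_add)
    then show ?thesis using z that Mpow_zero by simp
  qed
  have pair: "mink n ((M ^^ (k-2)) a) ((M ^^ (k-2)) b) = 0" if "minkvec n a" "minkvec n b" for a b
  proof -
    have "mink n ((M ^^ (k-2)) a) ((M ^^ (k-2)) b) = (-1) ^ (k-2) * mink n a ((M ^^ (k-2)) ((M ^^ (k-2)) b))"
      using Mpow_sk that Mpow_W by blast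
    also have "(M ^^ (k-2)) ((M ^^ (k-2)) b) = (M ^^ (2*k - 4)) b"
    proof -
      have e: "2*k - 4 = (k-2) + (k-2)" using k by simp
      show ?thesis by (simp only: e funpow_add o_apply)
    qed
    finally show ?thesis using big[OF that(2)] by (simp add: mink_zero)
  qed
  define x where "x = (M ^^ (k-2)) u"
  have xW: "minkvec n x" using Mpow_W u x_def by simp
  have y: "(M ^^ (k-1)) u = M x"
  proof -
    have "k - 1 = Suc (k - 2)" using k by simp
    then show ?thesis by (simp add: x_def)
  qed
  have y2: "M x = (M ^^ (k-2)) (M u)"
    by (simp add: x_def funpow_swap1)
  have xx: "mink n x x = 0" using pair u x_def by simp
  have yy: "mink n (M x) (M x) = 0" using pair[of "M u" "M u"] MW u y2 by simp
  have xy: "mink n x (M x) = 0" using pair[of u "M u"] MW u y2 x_def by simp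
  show "(M ^^ (k - 1)) u = (\<lambda>_. 0)"
  proof (cases "x = (\<lambda>_. 0)")
    case True then show ?thesis using y Mzero by simp
  next
    case False
    obtain s where s: "M x = (\<lambda>i. s * x i)" using L1[OF n3 xW MW[OF xW] xx yy xy False] by blast
    have "(M ^^ k) u = M (M x)"
    proof -
      have "k = Suc (Suc (k - 2))" using k by simp
      then show ?thesis by (metis x_def funpow.simps(2) o_apply)
    qed
    also have "\<dots> = (\<lambda>i. s * (s * x i))" using s Mscale by simp
    finally have "(\<lambda>i. s * (s * x i)) = (\<lambda>_. 0)" using z u by simp
    then have "s = 0" using False by (auto simp: fun_eq_iff)
    then show ?thesis using y s by simp
  qed
qed

lemma Msk2: "minkvec n w \<Longrightarrow> minkvec n v \<Longrightarrow> mink n (M (M w)) v = mink n w (M (M v))"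
  using Msk MW by simp

lemma Mself: "minkvec n w \<Longrightarrow> mink n (M w) w = 0"
  using Msk[of w w] by (simp add: mink_sym)

lemma cube_struct:
  assumes M3: "\<And>w. minkvec n w \<Longrightarrow> M (M (M w)) = (\<lambda>_. 0)"
    and u1: "minkvec n u1" and nz: "M (M u1) \<noteq> (\<lambda>_. 0)"
  shows "\<exists>l w0 m. minkvec n l \<and> l \<noteq> (\<lambda>_. 0) \<and> mink n l l = 0 \<and> minkvec n w0 \<and> mink n l w0 = 1
     \<and> minkvec n m \<and> mink n m l = 0 \<and> mink n m w0 = 0 \<and> mink n m m \<noteq> 0
     \<and> (\<forall>w. minkvec n w \<longrightarrow> M w = (\<lambda>i. mink n l w * m i - mink n m w * l i))"
proof -
  define l where "l = M (M u1)"
  have lW: "minkvec n l" using MW u1 l_def by simp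
  have lnz: "l \<noteq> (\<lambda>_. 0)" using nz l_def by simp
  have iso: "mink n (M (M a)) (M (M b)) = 0" if "minkvec n a" "minkvec n b" for a b
  proof -
    have "mink n (M (M a)) (M (M b)) = mink n a (M (M (M (M b))))" using Msk2 that MW by simp
    also have "M (M (M (M b))) = (\<lambda>_. 0)" using M3[OF MW[OF that(2)]] .
    finally show ?thesis by (simp add: mink_zero)
  qed
  have ll: "mink n l l = 0" using iso u1 l_def by simp
  obtain w0 where w0: "minkvec n w0" "mink n l w0 = 1" using nondeg[OF n3 lW lnz] by blast
  have Ml: "M l = (\<lambda>_. 0)" using M3 u1 l_def by simp
  have par: "\<exists>c. M (M v) = (\<lambda>i. c * l i)" if v: "minkvec n v" for v
    using L1[OF n3 lW MW[OF MW[OF v]] ll iso[OF v v]] iso[OF u1 v] lnz l_def by simp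
  define m where "m = M w0"
  have mW: "minkvec n m" using MW w0 m_def by simp
  have mw0: "mink n m w0 = 0" using Mself[OF w0(1)] m_def by simp
  obtain c0 where c0: "M (M w0) = (\<lambda>i. c0 * l i)" using par w0 by blast
  have perp: "M w = (\<lambda>i. - mink n w m * l i)" if w: "minkvec n w" "mink n l w = 0" for w
  proof -
    obtain c where c: "M (M w) = (\<lambda>i. c * l i)" using par w by blast
    have "c = mink n (M (M w)) w0" using c w0 by (simp add: mink_scale)
    also have "\<dots> = mink n w (M (M w0))" using Msk2 w w0 by simp
    also have "\<dots> = 0" using c0 w by (simp add: mink_scale2 mink_sym)
    finally have MMw: "M (M w) = (\<lambda>_. 0)" using c by simp
    have a1: "mink n (M w) (M w) = 0" using Msk[of w "M w"] w MW MMw by (simp add: mink_zero)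
    have a2: "mink n l (M w) = 0" using Msk[of l w] lW w Ml by (simp add: mink_zero)
    obtain s where s: "M w = (\<lambda>i. s * l i)" using L1[OF n3 lW MW[OF w(1)] ll a1 a2 lnz] by blast
    have "s = mink n (M w) w0" using s w0 by (simp add: mink_scale)
    also have "\<dots> = - mink n w m" using Msk w w0 m_def by simp
    finally show ?thesis using s by simp
  qed
  have form: "M w = (\<lambda>i. mink n l w * m i - mink n m w * l i)" if w: "minkvec n w" for w
  proof -
    define w' where "w' = (\<lambda>i. w i - mink n l w * w0 i)"
    have w'W: "minkvec n w'" using w w0 by (simp add: w'_def minkvec_def)
    have lw': "mink n l w' = 0" using w0 by (simp add: w'_def mink_diff2 mink_scale2)
    have "w = (\<lambda>i. w' i + mink n l w * w0 i)" by (simp add: w'_def)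
    then have "M w = (\<lambda>i. M w' i + mink n l w * M w0 i)" using Madd Mscale by metis
    also have "M w' = (\<lambda>i. - mink n w' m * l i)" using perp w'W lw' by simp
    also have "mink n w' m = mink n m w" using mw0
      by (simp add: w'_def mink_diff mink_scale mink_sym)
    finally show ?thesis by (auto simp: m_def algebra_simps)
  qed
  have ml: "mink n m l = 0" using Msk[of w0 l] w0 lW Ml m_def by (simp add: mink_zero)
  have mm: "mink n m m \<noteq> 0"
  proof
    assume mm0: "mink n m m = 0"
    have Mm: "M m = (\<lambda>_. 0)" using form[OF mW] mm0 by (simp add: mink_sym[of n l m] ml)
    have "M u1 = (\<lambda>i. mink n l u1 * m i - mink n m u1 * l i)" using form u1 by simp
    then have "M (M u1) = (\<lambda>i. mink n l u1 * M m i - mink n m u1 * M l i)" using Mlin[of "mink n l u1" m "- mink n m u1" l] by simp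
    then have "l = (\<lambda>_. 0)" using Mm Ml l_def by simp
    then show False using lnz by simp
  qed
  show ?thesis using lW lnz ll w0 mW ml mw0 mm form by blast
qed

end



definition islin :: "((nat \<Rightarrow> real) \<Rightarrow> nat \<Rightarrow> real) \<Rightarrow> bool" where
  "islin f \<longleftrightarrow> (\<forall>a b u v. f (\<lambda>i. a * u i + b * v i) = (\<lambda>i. a * f u i + b * f v i))"

lemma islin_zero: "islin f \<Longrightarrow> f (\<lambda>i. 0) = (\<lambda>i. 0)"
  unfolding islin_def by (drule spec[of _ 0], drule spec[of _ 0]) simp

lemma islin_add: "islin f \<Longrightarrow> f (\<lambda>i. u i + v i) = (\<lambda>i. f u i + f v i)"
  unfolding islin_def by (drule spec[of _ 1], drule spec[of _ 1]) simp

lemma islin_scale: "islin f \<Longrightarrow> f (\<lambda>i. a * u i) = (\<lambda>i. a * f u i)"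
  unfolding islin_def by (drule spec[of _ a], drule spec[of _ 0]) simp

lemma islin_sum: fixes m :: nat shows "islin f \<Longrightarrow> f (\<lambda>i. \<Sum>j<m. c j * s j i) = (\<lambda>i. \<Sum>j<m. c j * f (s j) i)"
proof (induction m)
  case 0 then show ?case using islin_zero by simp
next
  case (Suc m)
  have "f (\<lambda>i. \<Sum>j<Suc m. c j * s j i) = f (\<lambda>i. (\<Sum>j<m. c j * s j i) + c m * s m i)"
    by simp
  also have "\<dots> = (\<lambda>i. f (\<lambda>i. \<Sum>j<m. c j * s j i) i + c m * f (s m) i)"
    using islin_add[OF Suc.prems] islin_scale[OF Suc.prems] by metis
  also have "\<dots> = (\<lambda>i. \<Sum>j<Suc m. c j * f (s j) i)" using Suc by simp
  finally show ?case .
qed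

lemma islin_restr:
  fixes m :: nat
  assumes "islin f" "\<forall>j<m. f (s j) = (\<lambda>i. \<Sum>k<m. A k j * s k i)"
  shows "f (\<lambda>i. \<Sum>j<m. c j * s j i) = (\<lambda>i. \<Sum>k<m. (\<Sum>j<m. A k j * c j) * s k i)"
proof -
  have "f (\<lambda>i. \<Sum>j<m. c j * s j i) = (\<lambda>i. \<Sum>j<m. c j * f (s j) i)" using islin_sum assms(1) .
  also have "\<dots> = (\<lambda>i. \<Sum>j<m. c j * (\<Sum>k<m. A k j * s k i))" using assms(2) by (auto intro!: sum.cong)
  also have "\<dots> = (\<lambda>i. \<Sum>k<m. (\<Sum>j<m. A k j * c j) * s k i)"
  proof
    fix i
    have "(\<Sum>j<m. c j * (\<Sum>k<m. A k j * s k i)) = (\<Sum>j<m. \<Sum>k<m. A k j * c j * s k i)"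
      by (auto simp: sum_distrib_left mult_ac intro!: sum.cong)
    also have "\<dots> = (\<Sum>k<m. \<Sum>j<m. A k j * c j * s k i)" by (rule sum.swap)
    also have "\<dots> = (\<Sum>k<m. (\<Sum>j<m. A k j * c j) * s k i)" by (simp add: sum_distrib_right)
    finally show "(\<Sum>j<m. c j * (\<Sum>k<m. A k j * s k i)) = (\<Sum>k<m. (\<Sum>j<m. A k j * c j) * s k i)" .
  qed
  finally show ?thesis .
qed

definition indep :: "nat \<Rightarrow> (nat \<Rightarrow> nat \<Rightarrow> real) \<Rightarrow> bool" where
  "indep m s \<longleftrightarrow> (\<forall>c. (\<forall>i. (\<Sum>k<m. c k * s k i) = 0) \<longrightarrow> (\<forall>k<m. c k = 0))"

lemma indep_uniq:
  assumes "indep m s" "(\<lambda>i. \<Sum>k<m. c k * s k i) = (\<lambda>i. \<Sum>k<m. d k * s k i)"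
  shows "\<forall>k<m. c k = d k"
proof -
  have "\<forall>i. (\<Sum>k<m. (c k - d k) * s k i) = 0"
  proof
    fix i
    have "(\<Sum>k<m. c k * s k i) = (\<Sum>k<m. d k * s k i)" using assms(2) by metis
    then show "(\<Sum>k<m. (c k - d k) * s k i) = 0" by (simp add: left_diff_distrib sum_subtractf)
  qed
  then show ?thesis using assms(1) unfolding indep_def by (metis eq_iff_diff_eq_0)
qed

lemma basis_vec: fixes m :: nat and s :: "nat \<Rightarrow> nat \<Rightarrow> real" shows "k < m \<Longrightarrow> s k = (\<lambda>i. \<Sum>l<m. (if l = k then 1 else 0) * s l i)"
proof
  fix i assume k: "k < m"
  have "(\<Sum>l<m. (if l = k then 1 else 0) * s l i) = (if k = k then 1 else 0) * s k i"
    by (rule sum_single) (use k in auto)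
  then show "s k i = (\<Sum>l<m. (if l = k then 1 else 0) * s l i)" by simp
qed

lemma sum2: "(\<Sum>k<(2::nat). f k) = f 0 + f 1"
  by (simp add: numeral_2_eq_2)

lemma sum4: "(\<Sum>k<(4::nat). f k) = f 0 + f 1 + f 2 + f 3"
proof -
  have "{..<(4::nat)} = {0,1,2,3}" by auto
  then show ?thesis by (simp add: add.assoc)
qed

lemma heis2:
  fixes a00 a01 a10 a11 b00 b01 b10 b11 c00 c01 c10 c11 :: real
  assumes c00: "c00 = (a00*b00 + a01*b10) - (b00*a00 + b01*a10)"
    and c01: "c01 = (a00*b01 + a01*b11) - (b00*a01 + b01*a11)"
    and c10: "c10 = (a10*b00 + a11*b10) - (b10*a00 + b11*a10)"
    and c11: "c11 = (a10*b01 + a11*b11) - (b10*a01 + b11*a11)"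
    and x00: "a00*c00 + a01*c10 = c00*a00 + c01*a10"
    and x01: "a00*c01 + a01*c11 = c00*a01 + c01*a11"
    and x10: "a10*c00 + a11*c10 = c10*a00 + c11*a10"
    and x11: "a10*c01 + a11*c11 = c10*a01 + c11*a11"
    and y00: "b00*c00 + b01*c10 = c00*b00 + c01*b10"
    and y01: "b00*c01 + b01*c11 = c00*b01 + c01*b11"
    and y10: "b10*c00 + b11*c10 = c10*b00 + c11*b10"
    and y11: "b10*c01 + b11*c11 = c10*b01 + c11*b11"
  shows "c00 = 0 \<and> c01 = 0 \<and> c10 = 0 \<and> c11 = 0"
proof -
  have t: "c11 = - c00" unfolding c00 c11 by (simp add: algebra_simps)
  have ex01: "c01 * (a00 - a11) = 2 * (a01 * c00)" using x01 unfolding t by (simp add: algebra_simps)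
  have ey01: "c01 * (b00 - b11) = 2 * (b01 * c00)" using y01 unfolding t by (simp add: algebra_simps)
  have ex10: "c10 * (a00 - a11) = 2 * (a10 * c00)" using x10 unfolding t by (simp add: algebra_simps)
  have ey10: "c10 * (b00 - b11) = 2 * (b10 * c00)" using y10 unfolding t by (simp add: algebra_simps)
  have f01: "c01 = b01 * (a00 - a11) - a01 * (b00 - b11)" unfolding c01 by (simp add: algebra_simps)
  have f10: "c10 = a10 * (b00 - b11) - b10 * (a00 - a11)" unfolding c10 by (simp add: algebra_simps)
  have f00: "c00 = a01 * b10 - b01 * a10" unfolding c00 by (simp add: algebra_simps)
  have "c01 * c01 = b01 * (c01 * (a00 - a11)) - a01 * (c01 * (b00 - b11))"
    by (subst (2) f01) (simp add: algebra_simps)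
  also have "\<dots> = 0" unfolding ex01 ey01 by (simp add: algebra_simps)
  finally have z01: "c01 = 0" by simp
  have "c10 * c10 = a10 * (c10 * (b00 - b11)) - b10 * (c10 * (a00 - a11))"
    by (subst (2) f10) (simp add: algebra_simps)
  also have "\<dots> = 0" unfolding ex10 ey10 by (simp add: algebra_simps)
  finally have z10: "c10 = 0" by simp
  have a01c: "a01 * c00 = 0" using ex01 z01 by simp
  have b01c: "b01 * c00 = 0" using ey01 z01 by simp
  have "c00 * c00 = (a01 * c00) * b10 - (b01 * c00) * a10"
    by (subst (2) f00) (simp add: algebra_simps)
  also have "\<dots> = 0" unfolding a01c b01c by simp
  finally have z00: "c00 = 0" by simp
  show ?thesis using z00 z01 z10 t by simp
qed

locale heis_ops =
  fixes x y z :: "(nat \<Rightarrow> real) \<Rightarrow> nat \<Rightarrow> real"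
  assumes xlin: "islin x" and ylin: "islin y"
    and heis: "\<And>u. z u = (\<lambda>i. x (y u) i - y (x u) i)"
    and cx: "\<And>u. x (z u) = z (x u)" and cy: "\<And>u. y (z u) = z (y u)"
begin

lemma zlin: "islin z"
  unfolding islin_def
proof (intro allI)
  fix a b u v
  show "z (\<lambda>i. a * u i + b * v i) = (\<lambda>i. a * z u i + b * z v i)"
    unfolding heis using xlin ylin unfolding islin_def by (simp add: algebra_simps)
qed

lemma restr_heis:
  fixes m :: nat
  assumes ind: "indep m s"
    and A: "\<forall>j<m. x (s j) = (\<lambda>i. \<Sum>k<m. A k j * s k i)"
    and B: "\<forall>j<m. y (s j) = (\<lambda>i. \<Sum>k<m. B k j * s k i)"
  defines "C \<equiv> \<lambda>k j. (\<Sum>l<m. A k l * B l j - B k l * A l j)"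
  shows "\<forall>j<m. z (s j) = (\<lambda>i. \<Sum>k<m. C k j * s k i)"
    and "\<forall>j<m. \<forall>k<m. (\<Sum>l<m. A k l * C l j) = (\<Sum>l<m. C k l * A l j)"
    and "\<forall>j<m. \<forall>k<m. (\<Sum>l<m. B k l * C l j) = (\<Sum>l<m. C k l * B l j)"
proof -
  have zs: "z (s j) = (\<lambda>i. \<Sum>k<m. C k j * s k i)" if j: "j < m" for j
  proof -
    have ys: "y (s j) = (\<lambda>i. \<Sum>k<m. B k j * s k i)" using B j by blast
    have xs: "x (s j) = (\<lambda>i. \<Sum>k<m. A k j * s k i)" using A j by blast
    have xy: "x (y (s j)) = (\<lambda>i. \<Sum>k<m. (\<Sum>l<m. A k l * B l j) * s k i)"
      unfolding ys by (rule islin_restr[OF xlin A])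
    have yx: "y (x (s j)) = (\<lambda>i. \<Sum>k<m. (\<Sum>l<m. B k l * A l j) * s k i)"
      unfolding xs by (rule islin_restr[OF ylin B])
    show ?thesis unfolding heis[of "s j"] xy yx C_def
      by (simp add: sum_subtractf left_diff_distrib)
  qed
  then show zr: "\<forall>j<m. z (s j) = (\<lambda>i. \<Sum>k<m. C k j * s k i)" by blast
  show "\<forall>j<m. \<forall>k<m. (\<Sum>l<m. A k l * C l j) = (\<Sum>l<m. C k l * A l j)"
  proof (intro allI impI)
    fix j k assume j: "j < m" and k: "k < m"
    have xs: "x (s j) = (\<lambda>i. \<Sum>k<m. A k j * s k i)" using A j by blast
    have e1: "x (z (s j)) = (\<lambda>i. \<Sum>k<m. (\<Sum>l<m. A k l * C l j) * s k i)"
      unfolding zs[OF j] by (rule islin_restr[OF xlin A])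
    have e2: "z (x (s j)) = (\<lambda>i. \<Sum>k<m. (\<Sum>l<m. C k l * A l j) * s k i)"
      unfolding xs by (rule islin_restr[OF zlin zr])
    have "(\<lambda>i. \<Sum>k<m. (\<Sum>l<m. A k l * C l j) * s k i) = (\<lambda>i. \<Sum>k<m. (\<Sum>l<m. C k l * A l j) * s k i)"
      using e1 e2 cx[of "s j"] by simp
    from indep_uniq[OF ind this] k show "(\<Sum>l<m. A k l * C l j) = (\<Sum>l<m. C k l * A l j)" by blast
  qed
  show "\<forall>j<m. \<forall>k<m. (\<Sum>l<m. B k l * C l j) = (\<Sum>l<m. C k l * B l j)"
  proof (intro allI impI)
    fix j k assume j: "j < m" and k: "k < m"
    have ys: "y (s j) = (\<lambda>i. \<Sum>k<m. B k j * s k i)" using B j by blast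
    have e1: "y (z (s j)) = (\<lambda>i. \<Sum>k<m. (\<Sum>l<m. B k l * C l j) * s k i)"
      unfolding zs[OF j] by (rule islin_restr[OF ylin B])
    have e2: "z (y (s j)) = (\<lambda>i. \<Sum>k<m. (\<Sum>l<m. C k l * B l j) * s k i)"
      unfolding ys by (rule islin_restr[OF zlin zr])
    have "(\<lambda>i. \<Sum>k<m. (\<Sum>l<m. B k l * C l j) * s k i) = (\<lambda>i. \<Sum>k<m. (\<Sum>l<m. C k l * B l j) * s k i)"
      using e1 e2 cy[of "s j"] by simp
    from indep_uniq[OF ind this] k show "(\<Sum>l<m. B k l * C l j) = (\<Sum>l<m. C k l * B l j)" by blast
  qed
qed

lemma G1:
  assumes ind2: "\<And>a b. (\<forall>i. a * s0 i + b * s1 i = 0) \<Longrightarrow> a = 0 \<and> b = 0"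
    and ix0: "\<exists>a b. x s0 = (\<lambda>i. a * s0 i + b * s1 i)"
    and ix1: "\<exists>a b. x s1 = (\<lambda>i. a * s0 i + b * s1 i)"
    and iy0: "\<exists>a b. y s0 = (\<lambda>i. a * s0 i + b * s1 i)"
    and iy1: "\<exists>a b. y s1 = (\<lambda>i. a * s0 i + b * s1 i)"
  shows "z s0 = (\<lambda>_. 0) \<and> z s1 = (\<lambda>_. 0)"
proof -
  obtain a00 a10 where xa0: "x s0 = (\<lambda>i. a00 * s0 i + a10 * s1 i)" using ix0 by blast
  obtain a01 a11 where xa1: "x s1 = (\<lambda>i. a01 * s0 i + a11 * s1 i)" using ix1 by blast
  obtain b00 b10 where yb0: "y s0 = (\<lambda>i. b00 * s0 i + b10 * s1 i)" using iy0 by blast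
  obtain b01 b11 where yb1: "y s1 = (\<lambda>i. b01 * s0 i + b11 * s1 i)" using iy1 by blast
  define s where "s = (\<lambda>k::nat. if k = 0 then s0 else s1)"
  define A where "A = (\<lambda>(k::nat) (j::nat). if k = 0 then (if j = 0 then a00 else a01) else (if j = 0 then a10 else a11))"
  define B where "B = (\<lambda>(k::nat) (j::nat). if k = 0 then (if j = 0 then b00 else b01) else (if j = 0 then b10 else b11))"
  have ind: "indep 2 s" unfolding indep_def
  proof (intro allI impI)
    fix c :: "nat \<Rightarrow> real" and k :: nat assume h: "\<forall>i. (\<Sum>k<(2::nat). c k * s k i) = 0" and k: "k < (2::nat)"
    have "\<forall>i. c 0 * s0 i + c 1 * s1 i = 0" using h by (simp add: sum2 s_def)
    then have "c 0 = 0 \<and> c 1 = 0" by (rule ind2)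
    then show "c k = 0" using k by (cases k) auto
  qed
  have hA: "\<forall>j<(2::nat). x (s j) = (\<lambda>i. \<Sum>k<(2::nat). A k j * s k i)"
  proof (intro allI impI)
    fix j :: nat assume "j < 2" then have "j = 0 \<or> j = 1" by auto
    then show "x (s j) = (\<lambda>i. \<Sum>k<(2::nat). A k j * s k i)" using xa0 xa1 by (auto simp: sum2 s_def A_def)
  qed
  have hB: "\<forall>j<(2::nat). y (s j) = (\<lambda>i. \<Sum>k<(2::nat). B k j * s k i)"
  proof (intro allI impI)
    fix j :: nat assume "j < 2" then have "j = 0 \<or> j = 1" by auto
    then show "y (s j) = (\<lambda>i. \<Sum>k<(2::nat). B k j * s k i)" using yb0 yb1 by (auto simp: sum2 s_def B_def)
  qed
  define C where "C \<equiv> \<lambda>k j. (\<Sum>l<(2::nat). A k l * B l j - B k l * A l j)"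
  note R = restr_heis[OF ind hA hB]
  have Rz: "z (s j) = (\<lambda>i. \<Sum>k<(2::nat). C k j * s k i)" if "j < (2::nat)" for j
    using R(1) that unfolding C_def by blast
  have XA: "(\<Sum>l<(2::nat). A k l * C l j) = (\<Sum>l<(2::nat). C k l * A l j)" if "j < 2" "k < 2" for j k
    using R(2) that unfolding C_def by blast
  have XB: "(\<Sum>l<(2::nat). B k l * C l j) = (\<Sum>l<(2::nat). C k l * B l j)" if "j < 2" "k < 2" for j k
    using R(3) that unfolding C_def by blast
  have c: "C 0 0 = 0 \<and> C 0 1 = 0 \<and> C 1 0 = 0 \<and> C 1 1 = 0"
  proof (rule heis2[of "C 0 0" a00 b00 a01 b10 b01 a10 "C 0 1" b11 a11 "C 1 0" "C 1 1"])
    show "C 0 0 = a00 * b00 + a01 * b10 - (b00 * a00 + b01 * a10)" by (simp add: C_def sum2 A_def B_def)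
    show "C 0 1 = a00 * b01 + a01 * b11 - (b00 * a01 + b01 * a11)" by (simp add: C_def sum2 A_def B_def)
    show "C 1 0 = a10 * b00 + a11 * b10 - (b10 * a00 + b11 * a10)" by (simp add: C_def sum2 A_def B_def)
    show "C 1 1 = a10 * b01 + a11 * b11 - (b10 * a01 + b11 * a11)" by (simp add: C_def sum2 A_def B_def)
  qed (use XA[of 0 0] XA[of 0 1] XA[of 1 0] XA[of 1 1] XB[of 0 0] XB[of 0 1] XB[of 1 0] XB[of 1 1]
       in \<open>simp_all add: sum2 A_def B_def\<close>)
  have z0: "z s0 = (\<lambda>i. \<Sum>k<(2::nat). C k 0 * s k i)" using Rz[of 0] by (simp add: s_def)
  have z1: "z s1 = (\<lambda>i. \<Sum>k<(2::nat). C k 1 * s k i)" using Rz[of 1] by (simp add: s_def)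
  show ?thesis using z0 z1 c by (simp add: sum2)
qed

lemma G2:
  assumes zt0: "z (z s0) = (\<lambda>_. 0)" and zt1: "z (z s1) = (\<lambda>_. 0)"
    and ind4: "\<And>a b c d. (\<forall>i. a * s0 i + b * s1 i + c * z s0 i + d * z s1 i = 0) \<Longrightarrow> a = 0 \<and> b = 0 \<and> c = 0 \<and> d = 0"
    and ix0: "\<exists>a b c d. x s0 = (\<lambda>i. a * s0 i + b * s1 i + c * z s0 i + d * z s1 i)"
    and ix1: "\<exists>a b c d. x s1 = (\<lambda>i. a * s0 i + b * s1 i + c * z s0 i + d * z s1 i)"
    and iy0: "\<exists>a b c d. y s0 = (\<lambda>i. a * s0 i + b * s1 i + c * z s0 i + d * z s1 i)"
    and iy1: "\<exists>a b c d. y s1 = (\<lambda>i. a * s0 i + b * s1 i + c * z s0 i + d * z s1 i)"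
  shows False
proof -
  obtain a00 a10 a20 a30 where xa0: "x s0 = (\<lambda>i. a00 * s0 i + a10 * s1 i + a20 * z s0 i + a30 * z s1 i)" using ix0 by blast
  obtain a01 a11 a21 a31 where xa1: "x s1 = (\<lambda>i. a01 * s0 i + a11 * s1 i + a21 * z s0 i + a31 * z s1 i)" using ix1 by blast
  obtain b00 b10 b20 b30 where yb0: "y s0 = (\<lambda>i. b00 * s0 i + b10 * s1 i + b20 * z s0 i + b30 * z s1 i)" using iy0 by blast
  obtain b01 b11 b21 b31 where yb1: "y s1 = (\<lambda>i. b01 * s0 i + b11 * s1 i + b21 * z s0 i + b31 * z s1 i)" using iy1 by blast
  have zl: "islin z" by (rule zlin)
  have zc: "z (\<lambda>i. a * s0 i + b * s1 i + c * z s0 i + d * z s1 i) = (\<lambda>i. a * z s0 i + b * z s1 i)" for a b c d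
  proof -
    have "z (\<lambda>i. a * s0 i + b * s1 i + c * z s0 i + d * z s1 i) =
          (\<lambda>i. a * z s0 i + b * z s1 i + c * z (z s0) i + d * z (z s1) i)"
      using islin_add[OF zl] islin_scale[OF zl] by simp
    then show ?thesis using zt0 zt1 by simp
  qed
  have xt0: "x (z s0) = (\<lambda>i. a00 * z s0 i + a10 * z s1 i)" using cx[of s0] xa0 zc by simp
  have xt1: "x (z s1) = (\<lambda>i. a01 * z s0 i + a11 * z s1 i)" using cx[of s1] xa1 zc by simp
  have yt0: "y (z s0) = (\<lambda>i. b00 * z s0 i + b10 * z s1 i)" using cy[of s0] yb0 zc by simp
  have yt1: "y (z s1) = (\<lambda>i. b01 * z s0 i + b11 * z s1 i)" using cy[of s1] yb1 zc by simp
  define s where "s = (\<lambda>k::nat. if k = 0 then s0 else if k = 1 then s1 else if k = 2 then z s0 else z s1)"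
  define A where "A = (\<lambda>(k::nat) (j::nat).
     if j = 0 then (if k = 0 then a00 else if k = 1 then a10 else if k = 2 then a20 else a30)
     else if j = 1 then (if k = 0 then a01 else if k = 1 then a11 else if k = 2 then a21 else a31)
     else if j = 2 then (if k = 2 then a00 else if k = 3 then a10 else 0)
     else (if k = 2 then a01 else if k = 3 then a11 else 0))"
  define B where "B = (\<lambda>(k::nat) (j::nat).
     if j = 0 then (if k = 0 then b00 else if k = 1 then b10 else if k = 2 then b20 else b30)
     else if j = 1 then (if k = 0 then b01 else if k = 1 then b11 else if k = 2 then b21 else b31)
     else if j = 2 then (if k = 2 then b00 else if k = 3 then b10 else 0)
     else (if k = 2 then b01 else if k = 3 then b11 else 0))"
  have ind: "indep 4 s" unfolding indep_def
  proof (intro allI impI)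
    fix c :: "nat \<Rightarrow> real" and k :: nat assume h: "\<forall>i. (\<Sum>k<(4::nat). c k * s k i) = 0" and k: "k < (4::nat)"
    have "\<forall>i. c 0 * s0 i + c 1 * s1 i + c 2 * z s0 i + c 3 * z s1 i = 0" using h by (simp add: sum4 s_def)
    then have "c 0 = 0 \<and> c 1 = 0 \<and> c 2 = 0 \<and> c 3 = 0" by (rule ind4)
    moreover have "k = 0 \<or> k = 1 \<or> k = 2 \<or> k = 3" using k by auto
    ultimately show "c k = 0" by auto
  qed
  have hA: "\<forall>j<(4::nat). x (s j) = (\<lambda>i. \<Sum>k<(4::nat). A k j * s k i)"
  proof (intro allI impI)
    fix j :: nat assume "j < 4" then have "j = 0 \<or> j = 1 \<or> j = 2 \<or> j = 3" by auto
    then show "x (s j) = (\<lambda>i. \<Sum>k<(4::nat). A k j * s k i)" using xa0 xa1 xt0 xt1 by (auto simp: sum4 s_def A_def)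
  qed
  have hB: "\<forall>j<(4::nat). y (s j) = (\<lambda>i. \<Sum>k<(4::nat). B k j * s k i)"
  proof (intro allI impI)
    fix j :: nat assume "j < 4" then have "j = 0 \<or> j = 1 \<or> j = 2 \<or> j = 3" by auto
    then show "y (s j) = (\<lambda>i. \<Sum>k<(4::nat). B k j * s k i)" using yb0 yb1 yt0 yt1 by (auto simp: sum4 s_def B_def)
  qed
  define C where "C \<equiv> \<lambda>k j. (\<Sum>l<(4::nat). A k l * B l j - B k l * A l j)"
  note R = restr_heis[OF ind hA hB]
  have Rz: "z (s j) = (\<lambda>i. \<Sum>k<(4::nat). C k j * s k i)" if "j < (4::nat)" for j
    using R(1) that unfolding C_def by blast
  have "(\<lambda>i. \<Sum>k<(4::nat). C k 0 * s k i) = (\<lambda>i. \<Sum>k<(4::nat). (if k = 2 then 1 else 0) * s k i)"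
    using Rz[of 0] basis_vec[of 2 4 s] by (simp add: s_def)
  then have c20: "C 2 0 = 1" using indep_uniq[OF ind] by fastforce
  have "(\<lambda>i. \<Sum>k<(4::nat). C k 1 * s k i) = (\<lambda>i. \<Sum>k<(4::nat). (if k = 3 then 1 else 0) * s k i)"
    using Rz[of 1] basis_vec[of 3 4 s] by (simp add: s_def)
  then have c31: "C 3 1 = 1" using indep_uniq[OF ind] by fastforce
  have "C 2 0 + C 3 1 = 0" by (simp add: C_def sum4 A_def B_def algebra_simps)
  then show False using c20 c31 by simp
qed

end




definition mtr :: "nat \<Rightarrow> mat \<Rightarrow> real" where "mtr n A = (\<Sum>i\<le>n+1. A i i)"

primrec mpow :: "nat \<Rightarrow> mat \<Rightarrow> nat \<Rightarrow> mat" where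
  "mpow n A 0 = idm n"
| "mpow n A (Suc k) = mmul n (mpow n A k) A"

lemma supported_mmul: "supported n (mmul n A B)"
  by (auto simp: supported_def mmul_def)

lemma supported_idm: "supported n (idm n)"
  by (auto simp: supported_def idm_def)

lemma mmul_idm_left: "supported n A \<Longrightarrow> mmul n (idm n) A = A"
proof (intro ext)
  fix i j assume s: "supported n A"
  show "mmul n (idm n) A i j = A i j"
  proof (cases "i \<le> n + 1 \<and> j \<le> n + 1")
    case True
    have "(\<Sum>k\<le>n+1. idm n i k * A k j) = idm n i i * A i j"
      by (rule sum_single) (use True in \<open>auto simp: idm_def\<close>)
    then show ?thesis using True by (simp add: mmul_def idm_def)
  qed (use s in \<open>auto simp: mmul_def supported_def\<close>)
qed

lemma mmul_idm_right: "supported n A \<Longrightarrow> mmul n A (idm n) = A"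
proof (intro ext)
  fix i j assume s: "supported n A"
  show "mmul n A (idm n) i j = A i j"
  proof (cases "i \<le> n + 1 \<and> j \<le> n + 1")
    case True
    have "(\<Sum>k\<le>n+1. A i k * idm n k j) = A i j * idm n j j"
      by (rule sum_single) (use True in \<open>auto simp: idm_def\<close>)
    then show ?thesis using True by (simp add: mmul_def idm_def)
  qed (use s in \<open>auto simp: mmul_def supported_def\<close>)
qed

lemma mtr_comm: "mtr n (mmul n A B) = mtr n (mmul n B A)"
proof -
  have "mtr n (mmul n A B) = (\<Sum>i\<le>n+1. \<Sum>k\<le>n+1. A i k * B k i)"
    by (auto simp: mtr_def mmul_def intro!: sum.cong)
  also have "\<dots> = (\<Sum>k\<le>n+1. \<Sum>i\<le>n+1. B k i * A i k)"
    by (subst sum.swap) (simp add: mult.commute)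
  also have "\<dots> = mtr n (mmul n B A)"
    by (auto simp: mtr_def mmul_def intro!: sum.cong)
  finally show ?thesis .
qed

lemma mmul_diff_right: "mmul n P (\<lambda>i j. A i j - B i j) = (\<lambda>i j. mmul n P A i j - mmul n P B i j)"
  by (rule ext)+ (simp add: mmul_def sum_subtractf right_diff_distrib)

lemma mtr_diff: "mtr n (\<lambda>i j. A i j - B i j) = mtr n A - mtr n B"
  by (simp add: mtr_def sum_subtractf)

lemma supported_so: "A \<in> so2n n \<Longrightarrow> supported n A"
  by (simp add: so2n_def)

lemma heis_trace:
  assumes sX: "supported n X" and sZ: "supported n Z"
    and Z: "bracket n X Y = Z" and XZ: "bracket n X Z = (\<lambda>_ _. 0)"
  shows "mtr n (mpow n Z (Suc k)) = 0"
proof -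
  have cXZ: "mmul n X Z = mmul n Z X"
  proof (intro ext)
    fix i j have "bracket n X Z i j = 0" using XZ by simp
    then show "mmul n X Z i j = mmul n Z X i j" by (simp add: bracket_def)
  qed
  have cP: "mmul n (mpow n Z m) X = mmul n X (mpow n Z m)" for m
  proof (induction m)
    case 0 then show ?case using sX by (simp add: mmul_idm_left mmul_idm_right)
  next
    case (Suc m)
    have "mmul n (mpow n Z (Suc m)) X = mmul n (mpow n Z m) (mmul n Z X)" by (simp add: mmul_assoc)
    also have "\<dots> = mmul n (mmul n (mpow n Z m) X) Z" by (simp add: mmul_assoc cXZ)
    also have "\<dots> = mmul n X (mpow n Z (Suc m))" by (simp add: Suc mmul_assoc)
    finally show ?case .
  qed
  define P where "P = mpow n Z k"
  have "mtr n (mmul n P (mmul n X Y)) = mtr n (mmul n P (mmul n Y X))"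
  proof -
    have "mtr n (mmul n P (mmul n X Y)) = mtr n (mmul n X (mmul n P Y))"
      using cP[of k] by (simp add: P_def mmul_assoc[symmetric])
    also have "\<dots> = mtr n (mmul n (mmul n P Y) X)" by (rule mtr_comm)
    also have "\<dots> = mtr n (mmul n P (mmul n Y X))" by (simp add: mmul_assoc)
    finally show ?thesis .
  qed
  moreover have "Z = (\<lambda>i j. mmul n X Y i j - mmul n Y X i j)"
    using Z by (auto simp: bracket_def)
  ultimately have "mtr n (mmul n P Z) = 0"
    by (simp add: mmul_diff_right mtr_diff)
  then show ?thesis by (simp add: P_def)
qed

definition toC :: "nat \<Rightarrow> mat \<Rightarrow> complex Matrix.mat" where
  "toC n A = Matrix.mat (n+2) (n+2) (\<lambda>(i,j). complex_of_real (A i j))"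

lemma toC_carrier: "toC n A \<in> carrier_mat (n+2) (n+2)"
  by (simp add: toC_def)

lemma sum_lt_le: fixes n :: nat shows "(\<Sum>k\<in>{0..<n+2}. f k) = (\<Sum>k\<le>n+1. f k)"
proof -
  have "{0..<n+2} = {..n+1}" by auto
  then show ?thesis by simp
qed

lemma toC_mmul: "toC n (mmul n A B) = toC n A * toC n B"
proof (rule eq_matI)
  fix i j assume i: "i < dim_row (toC n A * toC n B)" and j: "j < dim_col (toC n A * toC n B)"
  then have i': "i \<le> n + 1" and j': "j \<le> n + 1" by (auto simp: toC_def)
  have "(toC n A * toC n B) $$ (i,j) = (\<Sum>k\<in>{0..<n+2}. complex_of_real (A i k) * complex_of_real (B k j))"
    using i j by (simp add: toC_def scalar_prod_def)
  also have "\<dots> = complex_of_real (\<Sum>k\<le>n+1. A i k * B k j)"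
    unfolding sum_lt_le of_real_sum of_real_mult ..
  also have "\<dots> = toC n (mmul n A B) $$ (i,j)"
    using i' j' by (simp add: toC_def mmul_def less_Suc_eq_le)
  finally show "toC n (mmul n A B) $$ (i,j) = (toC n A * toC n B) $$ (i,j)" by simp
qed (auto simp: toC_def)

lemma toC_idm: "toC n (idm n) = 1\<^sub>m (n+2)"
  by (rule eq_matI) (auto simp: toC_def idm_def)

lemma dim_toC: "dim_row (toC n A) = n + 2" by (simp add: toC_def)

lemma toC_mpow: "toC n (mpow n A k) = toC n A ^\<^sub>m k"
  by (induction k) (simp_all add: toC_idm toC_mmul dim_toC)

lemma ctr_toC: "ctr (toC n A) = complex_of_real (mtr n A)"
proof -
  have "ctr (toC n A) = (\<Sum>i<n+2. complex_of_real (A i i))" by (simp add: ctr_def toC_def)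
  also have "\<dots> = complex_of_real (\<Sum>i\<le>n+1. A i i)"
  proof -
    have "{..<n+2} = {..n+1}" by auto
    then show ?thesis by simp
  qed
  finally show ?thesis by (simp add: mtr_def)
qed

lemma mvec_idm: "sv n u \<Longrightarrow> mvec n (idm n) u = u"
proof
  fix i assume u: "sv n u"
  show "mvec n (idm n) u i = u i"
  proof (cases "i \<le> n + 1")
    case True
    have "(\<Sum>k\<le>n+1. idm n i k * u k) = idm n i i * u i"
      by (rule sum_single) (use True in \<open>auto simp: idm_def\<close>)
    then show ?thesis using True by (simp add: mvec_def idm_def)
  qed (use u in \<open>auto simp: mvec_def sv_def\<close>)
qed

lemma mvec_mpow: "sv n u \<Longrightarrow> mvec n (mpow n A k) u = (mvec n A ^^ k) u"
proof (induction k arbitrary: u)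
  case 0 then show ?case by (simp add: mvec_idm)
next
  case (Suc k)
  have "mvec n (mpow n A (Suc k)) u = mvec n (mpow n A k) (mvec n A u)" by (simp add: mvec_mmul)
  also have "\<dots> = (mvec n A ^^ k) (mvec n A u)" using Suc.IH[of "mvec n A u"] mvec_sv by blast
  also have "\<dots> = (mvec n A ^^ Suc k) u" by (simp add: funpow_Suc_right del: funpow.simps)
  finally show ?case .
qed

lemma nilpotent_Z:
  assumes X: "X \<in> so2n n" and Zs: "Z \<in> so2n n"
    and Z: "bracket n X Y = Z" and XZ: "bracket n X Z = (\<lambda>_ _. 0)"
    and u: "sv n u"
  shows "(mvec n Z ^^ (n+2)) u = (\<lambda>_. 0)"
proof -
  have tr: "\<forall>k>0. ctr (toC n Z ^\<^sub>m k) = 0"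
  proof (intro allI impI)
    fix k :: nat assume "k > 0"
    then obtain k' where k: "k = Suc k'" by (cases k) auto
    have "mtr n (mpow n Z (Suc k')) = 0"
      by (rule heis_trace[OF supported_so[OF X] supported_so[OF Zs] Z XZ])
    then have "ctr (toC n (mpow n Z k)) = 0" using k by (simp only: ctr_toC) simp
    then show "ctr (toC n Z ^\<^sub>m k) = 0" by (simp only: toC_mpow)
  qed
  have "toC n Z ^\<^sub>m (n+2) = 0\<^sub>m (n+2) (n+2)"
    by (rule nilpotent_from_traces[OF toC_carrier tr])
  then have P0: "toC n (mpow n Z (n+2)) = 0\<^sub>m (n+2) (n+2)" by (simp only: toC_mpow)
  have e: "mpow n Z (n+2) i j = 0" if "i \<le> n + 1" "j \<le> n + 1" for i j
  proof -
    have "toC n (mpow n Z (n+2)) $$ (i,j) = 0" using P0 that by simp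
    then show ?thesis using that by (simp add: toC_def less_Suc_eq_le)
  qed
  have "mvec n (mpow n Z (n+2)) u = (\<lambda>_. 0)"
  proof
    fix i show "mvec n (mpow n Z (n+2)) u i = 0"
    proof (cases "i \<le> n + 1")
      case True
      have "(\<Sum>k\<le>n+1. mpow n Z (n+2) i k * u k) = 0"
        by (rule sum.neutral) (use True e in auto)
      then show ?thesis using True unfolding mvec_def by simp
    qed (simp add: mvec_def)
  qed
  then show ?thesis using mvec_mpow[OF u, of Z "n+2"] by (simp only:)
qed




definition qv :: "nat \<Rightarrow> (nat \<Rightarrow> nat \<Rightarrow> real) \<Rightarrow> nat \<Rightarrow> real" where
  "qv n Z = (\<lambda>i. if 1 \<le> i \<and> i \<le> n then - mvec n Z (fv n) i else 0)"

definition Mop :: "nat \<Rightarrow> (nat \<Rightarrow> nat \<Rightarrow> real) \<Rightarrow> (nat \<Rightarrow> real) \<Rightarrow> nat \<Rightarrow> real" where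
  "Mop n Z = (\<lambda>w. Wp n (mvec n Z w))"

lemma islin_mvec: "islin (mvec n A)"
  by (simp add: islin_def mvec_lin2)

lemma heis_ops_inst:
  assumes "bracket n X Y = Z" "bracket n X Z = (\<lambda>_ _. 0)" "bracket n Y Z = (\<lambda>_ _. 0)"
  shows "heis_ops (mvec n X) (mvec n Y) (mvec n Z)"
proof
  show "islin (mvec n X)" "islin (mvec n Y)" by (rule islin_mvec)+
  fix u
  show "mvec n Z u = (\<lambda>i. mvec n X (mvec n Y u) i - mvec n Y (mvec n X u) i)"
    using mvec_bracket[of n X Y u] assms(1) by simp
  have "mvec n (bracket n X Z) u = (\<lambda>_. 0)" using assms(2) unfolding mvec_def by (intro ext) simp
  then show "mvec n X (mvec n Z u) = mvec n Z (mvec n X u)"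
    unfolding mvec_bracket by (auto simp: fun_eq_iff)
  have "mvec n (bracket n Y Z) u = (\<lambda>_. 0)" using assms(3) unfolding mvec_def by (intro ext) simp
  then show "mvec n Y (mvec n Z u) = mvec n Z (mvec n Y u)"
    unfolding mvec_bracket by (auto simp: fun_eq_iff)
qed

lemma minkvec_sv: "minkvec n w \<Longrightarrow> sv n w"
  by (auto simp: minkvec_def sv_def)

lemma sv_e0: "sv n e0" by (auto simp: sv_def e0_def)
lemma sv_fv: "sv n (fv n)" by (auto simp: sv_def fv_def)

lemma Wp_minkvec: "minkvec n w \<Longrightarrow> Wp n w = w"
proof
  fix i assume "minkvec n w"
  then show "Wp n w i = w i" unfolding Wp_def minkvec_def by (cases "i = 0") auto
qed

lemma F_basic:
  assumes n3: "3 \<le> n" and X: "X \<in> so2n n" and Zs: "Z \<in> so2n n"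
    and Z: "bracket n X Y = Z" and XZ: "bracket n X Z = (\<lambda>_ _. 0)"
    and P: "Z \<in> palg n"
  shows "mvec n Z e0 = (\<lambda>_. 0)"
    and "minkvec n (qv n Z)"
    and "\<And>u. sv n u \<Longrightarrow> mvec n Z u = (\<lambda>i. mink n (qv n Z) u * e0 i + Mop n Z (Wp n u) i - u (n+1) * qv n Z i)"
    and "skewop n (Mop n Z)"
    and "\<And>w. minkvec n w \<Longrightarrow> (Mop n Z ^^ (n+2)) w = (\<lambda>_. 0)"
proof -
  let ?z = "mvec n Z"
  define q where "q = qv n Z"
  define M where "M = Mop n Z"
  have zlin: "islin ?z" by (rule islin_mvec)
  have nil: "\<And>u. sv n u \<Longrightarrow> (?z ^^ (n+2)) u = (\<lambda>_. 0)"
    using nilpotent_Z[OF X Zs Z XZ] by blast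
  define a where "a = Z 0 0"
  have ze0: "?z e0 = (\<lambda>i. a * e0 i)"
  proof
    fix i show "?z e0 i = a * e0 i"
    proof (cases "i \<le> n + 1")
      case True
      have "(\<Sum>k\<le>n+1. Z i k * e0 k) = Z i 0 * e0 0" by (rule sum_single) (auto simp: e0_def)
      moreover have "i \<noteq> 0 \<Longrightarrow> Z i 0 = 0" using P True by (auto simp: palg_def)
      ultimately show ?thesis using True by (auto simp: mvec_def e0_def a_def)
    qed (simp add: mvec_def e0_def)
  qed
  have zpe0: "(?z ^^ k) e0 = (\<lambda>i. a ^ k * e0 i)" for k
  proof (induction k)
    case 0 then show ?case by simp
  next
    case (Suc k)
    have "(?z ^^ Suc k) e0 = ?z (\<lambda>i. a ^ k * e0 i)" using Suc by simp
    also have "\<dots> = (\<lambda>i. a ^ k * ?z e0 i)" by (rule mvec_scale)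
    finally show ?case using ze0 by (simp add: fun_eq_iff algebra_simps)
  qed
  have "(\<lambda>i. a ^ (n+2) * e0 i) = (\<lambda>_. 0)" using nil[OF sv_e0] zpe0[of "n+2"] by simp
  then have "a ^ (n+2) = 0" by (auto simp: fun_eq_iff e0_def dest: spec[of _ 0])
  then have a0: "a = 0" by (metis power_eq_0_iff)
  show ze: "?z e0 = (\<lambda>_. 0)" using ze0 a0 by simp
  show qW: "minkvec n (qv n Z)" by (auto simp: qv_def minkvec_def)
  have sk: "Bf n (?z u) v = - Bf n u (?z v)" for u v by (rule skew[OF n3 Zs])
  define zf where "zf = ?z (fv n)"
  have zf1: "zf (n+1) = 0"
  proof -
    have "zf (n+1) = Bf n zf e0" by (simp add: Bf_e0'[OF n3])
    also have "\<dots> = - Bf n (fv n) (?z e0)" using sk zf_def by simp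
    also have "\<dots> = 0" using ze by (simp add: Bf_fv[OF n3])
    finally show ?thesis .
  qed
  have zf0: "zf 0 = 0"
  proof -
    have "zf 0 = Bf n zf (fv n)" by (simp add: Bf_fv'[OF n3])
    also have "\<dots> = - Bf n (fv n) zf" using sk zf_def by simp
    also have "\<dots> = - zf 0" by (simp add: Bf_fv[OF n3])
    finally show ?thesis by simp
  qed
  have zfq: "zf = (\<lambda>i. - q i)"
  proof
    fix i
    have "sv n zf" using zf_def mvec_sv by simp
    then show "zf i = - q i" using zf1 zf0 unfolding q_def qv_def sv_def zf_def[symmetric]
      by (cases "i = 0"; cases "i = n + 1"; cases "n + 1 < i") auto
  qed
  have zW: "?z w = (\<lambda>i. mink n q w * e0 i + M w i)" if w: "minkvec n w" for w
  proof -
    have a1: "?z w (n+1) = 0"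
    proof -
      have "?z w (n+1) = Bf n (?z w) e0" by (simp add: Bf_e0'[OF n3])
      also have "\<dots> = - Bf n w (?z e0)" using sk by simp
      finally show ?thesis using ze by (simp add: Bf_W[OF w] mink_zero)
    qed
    have a0: "?z w 0 = mink n q w"
    proof -
      have "?z w 0 = Bf n (?z w) (fv n)" by (simp add: Bf_fv'[OF n3])
      also have "\<dots> = - Bf n w zf" using sk zf_def by simp
      also have "\<dots> = mink n q w" using zfq w by (simp add: Bf_W mink_sym mink_scale2[of n w "-1" q, simplified])
      finally show ?thesis .
    qed
    show ?thesis
    proof
      fix i
      have "sv n (?z w)" by (rule mvec_sv)
      then show "?z w i = mink n q w * e0 i + M w i" using a1 a0 unfolding M_def Mop_def Wp_def e0_def sv_def
        by (cases "i = 0"; cases "i = n + 1"; cases "n + 1 < i") auto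
    qed
  qed
  show zgen: "?z u = (\<lambda>i. mink n (qv n Z) u * e0 i + Mop n Z (Wp n u) i - u (n+1) * qv n Z i)" if u: "sv n u" for u
  proof -
    have "u = (\<lambda>i. u 0 * e0 i + Wp n u i + u (n+1) * fv n i)" using sv_decomp[OF n3 u] .
    then have "?z u = ?z (\<lambda>i. u 0 * e0 i + Wp n u i + u (n+1) * fv n i)" by simp
    also have "\<dots> = (\<lambda>i. u 0 * ?z e0 i + ?z (Wp n u) i + u (n+1) * ?z (fv n) i)"
      by (simp add: mvec_add mvec_scale)
    also have "\<dots> = (\<lambda>i. mink n q u * e0 i + M (Wp n u) i - u (n+1) * q i)"
      using ze zW[OF minkvec_Wp] zfq zf_def by (auto simp: mink_Wp2[OF n3] fun_eq_iff)
    finally show ?thesis by (simp add: q_def M_def)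
  qed
  show skM: "skewop n (Mop n Z)"
  proof
    show "3 \<le> n" by (rule n3)
    show "minkvec n (Mop n Z w)" for w by (simp add: Mop_def minkvec_Wp)
    show "Mop n Z (\<lambda>i. a * u i + b * v i) = (\<lambda>i. a * Mop n Z u i + b * Mop n Z v i)" for a b u v
      by (auto simp: Mop_def Wp_def mvec_lin2)
    show "mink n (Mop n Z w) v = - mink n w (Mop n Z v)" if "minkvec n w" "minkvec n v" for w v
    proof -
      have "mink n (Mop n Z w) v = Bf n (?z w) v" by (simp add: Mop_def mink_Wp[OF n3] Bf_W that)
      also have "\<dots> = - Bf n w (?z v)" by (rule sk)
      also have "\<dots> = - mink n w (Mop n Z v)" by (simp add: Mop_def mink_Wp2[OF n3] Bf_W that)
      finally show ?thesis .
    qed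
  qed
  have pw: "\<exists>c. (?z ^^ k) w = (\<lambda>i. c * e0 i + (M ^^ k) w i)" if w: "minkvec n w" for w k
  proof (induction k)
    case 0 then show ?case by (intro exI[of _ 0]) simp
  next
    case (Suc k)
    then obtain c where c: "(?z ^^ k) w = (\<lambda>i. c * e0 i + (M ^^ k) w i)" by blast
    have MkW: "minkvec n ((M ^^ k) w)" using skewop.Mpow_W[OF skM] w M_def by simp
    have "(?z ^^ Suc k) w = ?z (\<lambda>i. c * e0 i + (M ^^ k) w i)" using c by simp
    also have "\<dots> = (\<lambda>i. c * ?z e0 i + 1 * ?z ((M ^^ k) w) i)" using mvec_lin2[of n Z c e0 1] by simp
    also have "\<dots> = (\<lambda>i. mink n q ((M ^^ k) w) * e0 i + (M ^^ Suc k) w i)"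
      using ze zW[OF MkW] by simp
    finally show ?case by blast
  qed
  show "(Mop n Z ^^ (n+2)) w = (\<lambda>_. 0)" if w: "minkvec n w" for w
  proof -
    obtain c where c: "(?z ^^ (n+2)) w = (\<lambda>i. c * e0 i + (M ^^ (n+2)) w i)" using pw[OF w] by blast
    have "(\<lambda>i. c * e0 i + (M ^^ (n+2)) w i) = (\<lambda>_. 0)" using c nil[OF minkvec_sv[OF w]] by simp
    then have "Wp n (\<lambda>i. c * e0 i + (M ^^ (n+2)) w i) = (\<lambda>_. 0)" by (simp add: Wp_def)
    moreover have "Wp n (\<lambda>i. c * e0 i + (M ^^ (n+2)) w i) = (M ^^ (n+2)) w"
    proof
      fix i
      have vW: "minkvec n ((M ^^ (n+2)) w)" using skewop.Mpow_W[OF skM w, of "n+2"] M_def by simp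
      then show "Wp n (\<lambda>i. c * e0 i + (M ^^ (n+2)) w i) i = (M ^^ (n+2)) w i"
        unfolding Wp_def e0_def minkvec_def by (cases "i = 0") auto
    qed
    ultimately show ?thesis using M_def by simp
  qed
qed




lemma lin2:
  fixes A B C D a b :: real
  assumes "A * a + B * b = 0" "C * a + D * b = 0" "A * D - B * C \<noteq> 0"
  shows "a = 0 \<and> b = 0"
proof -
  have "a * (A * D - B * C) = D * (A * a + B * b) - B * (C * a + D * b)" by (simp add: algebra_simps)
  then have "a * (A * D - B * C) = 0" using assms by simp
  then have a: "a = 0" using assms(3) by simp
  have "b * (A * D - B * C) = A * (C * a + D * b) - C * (A * a + B * b)" by (simp add: algebra_simps)
  then have "b * (A * D - B * C) = 0" using assms by simp
  then have "b = 0" using assms(3) by simp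
  with a show ?thesis by simp
qed

lemma cramer1:
  fixes E qm qq mu mm d :: real
  assumes d: "d = qm ^ 2 - mm * qq" "d \<noteq> 0"
  shows "(E * qm - qq * mu) / d * qm + (qm * mu - E * mm) / d * qq = E"
proof -
  have "(E * qm - qq * mu) / d * qm + (qm * mu - E * mm) / d * qq = ((E * qm - qq * mu) * qm + (qm * mu - E * mm) * qq) / d"
    by (simp add: add_divide_distrib)
  also have "(E * qm - qq * mu) * qm + (qm * mu - E * mm) * qq = E * d"
    by (simp only: d(1)) (simp add: algebra_simps power2_eq_square)
  finally show ?thesis using d(2) by simp
qed

lemma cramer2:
  fixes E qm qq mu mm d :: real
  assumes d: "d = qm ^ 2 - mm * qq" "d \<noteq> 0"
  shows "(E * qm - qq * mu) / d * mm + (qm * mu - E * mm) / d * qm = mu"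
proof -
  have "(E * qm - qq * mu) / d * mm + (qm * mu - E * mm) / d * qm = ((E * qm - qq * mu) * mm + (qm * mu - E * mm) * qm) / d"
    by (simp add: add_divide_distrib)
  also have "(E * qm - qq * mu) * mm + (qm * mu - E * mm) * qm = mu * d"
    by (simp only: d(1)) (simp add: algebra_simps power2_eq_square)
  finally show ?thesis using d(2) by simp
qed

lemma funpow_comm:
  assumes "\<And>u. f (g u) = g (f u)"
  shows "f ((g ^^ k) u) = (g ^^ k) (f u)"
  by (induction k) (auto simp: assms)

lemma e0_simps: "e0 0 = 1" "i \<noteq> 0 \<Longrightarrow> e0 i = 0" by (auto simp: e0_def)

lemma minkvec_0: "minkvec n v \<Longrightarrow> v 0 = 0" and minkvec_big: "minkvec n v \<Longrightarrow> n < i \<Longrightarrow> v i = 0"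
  by (auto simp: minkvec_def)

lemma mink_e0': "3 \<le> n \<Longrightarrow> mink n w e0 = 0"
  using mink_e0 mink_sym by metis

lemma mink_fv': "3 \<le> n \<Longrightarrow> mink n w (fv n) = 0"
  using mink_fv mink_sym by metis

lemma mink_div2: "mink n w (\<lambda>i. u i / c) = mink n w u / c"
  using mink_scale2[of n w "1/c" u] by simp

lemma mink_neg2: "mink n w (\<lambda>i. - u i) = - mink n w u"
  using mink_scale2[of n w "-1" u] by simp

lemma mink_scale2r: "mink n w (\<lambda>i. u i * c) = mink n w u * c"
  using mink_scale2[of n w c u] by (simp add: mult.commute)

lemma mvec_zero_mat: "mvec n (\<lambda>_ _. 0) u = (\<lambda>_. 0)"
  unfolding mvec_def by (intro ext) simp

lemma fun_zero_iff: "(f = (\<lambda>_. 0)) \<longleftrightarrow> (\<forall>i. f i = 0)" by auto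

locale setupZ =
  fixes n :: nat and X Y Z :: "nat \<Rightarrow> nat \<Rightarrow> real"
  assumes n3: "3 \<le> n" and Xs: "X \<in> so2n n" and Ys: "Y \<in> so2n n" and Zs: "Z \<in> so2n n"
    and Zb: "bracket n X Y = Z" and XZ: "bracket n X Z = (\<lambda>_ _. 0)" and YZ: "bracket n Y Z = (\<lambda>_ _. 0)"
    and PZ: "Z \<in> palg n"
begin

abbreviation "z \<equiv> mvec n Z"
abbreviation "x \<equiv> mvec n X"
abbreviation "y \<equiv> mvec n Y"
abbreviation "q \<equiv> qv n Z"
abbreviation "M \<equiv> Mop n Z"

lemmas B = F_basic[OF n3 Xs Zs Zb XZ PZ]

sublocale H: heis_ops x y z by (rule heis_ops_inst[OF Zb XZ YZ])
sublocale S: skewop n M by (rule B(4))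

lemma ze0: "z e0 = (\<lambda>_. 0)" by (rule B(1))
lemma qW: "minkvec n q" by (rule B(2))

lemma M3: "minkvec n w \<Longrightarrow> M (M (M w)) = (\<lambda>_. 0)"
proof -
  assume w: "minkvec n w"
  have "\<forall>v. minkvec n v \<longrightarrow> (M ^^ (n + 2 - d)) v = (\<lambda>_. 0)" if "d \<le> n - 1" for d
    using that
  proof (induction d)
    case 0 then show ?case using B(5) by simp
  next
    case (Suc d)
    then have k: "4 \<le> n + 2 - d" and IH: "\<forall>v. minkvec n v \<longrightarrow> (M ^^ (n + 2 - d)) v = (\<lambda>_. 0)" by auto
    have e: "n + 2 - Suc d = n + 2 - d - 1" by simp
    show ?case unfolding e using S.descend[OF k] IH by blast
  qed
  from this[of "n - 1"] w have "(M ^^ (n + 2 - (n - 1))) w = (\<lambda>_. 0)" by blast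
  moreover have "n + 2 - (n - 1) = 3" using n3 by simp
  ultimately show ?thesis by (simp add: numeral_3_eq_3)
qed

lemma zgen: "sv n u \<Longrightarrow> z u = (\<lambda>i. mink n q u * e0 i + M (Wp n u) i - u (n+1) * q i)"
  by (rule B(3))

lemma xz_comm: "x ((z ^^ k) u) = (z ^^ k) (x u)"
  by (rule funpow_comm) (rule H.cx)

lemma yz_comm: "y ((z ^^ k) u) = (z ^^ k) (y u)"
  by (rule funpow_comm) (rule H.cy)

lemma q0: "q 0 = 0" and qbig: "n < i \<Longrightarrow> q i = 0" using qW by (auto simp: minkvec_def)

lemma mink_q_fv: "mink n q (fv n) = 0" using mink_fv'[OF n3] .

lemma zfv: "z (fv n) = (\<lambda>i. - q i)"
proof -
  have "z (fv n) = (\<lambda>i. mink n q (fv n) * e0 i + M (Wp n (fv n)) i - fv n (n+1) * q i)"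
    using zgen[OF sv_fv] .
  moreover have "Wp n (fv n) = (\<lambda>_. 0)" by (auto simp: Wp_def fv_def)
  ultimately show ?thesis using S.Mzero mink_q_fv by (simp add: fv_def)
qed

lemma caseA:
  assumes M0: "\<And>w. minkvec n w \<Longrightarrow> M w = (\<lambda>_. 0)" and Znz: "Z \<noteq> (\<lambda>_ _. 0)"
  shows "q \<noteq> (\<lambda>_. 0) \<and> mink n q q = 0 \<and> (\<forall>u. sv n u \<longrightarrow> z u = (\<lambda>i. mink n q u * e0 i - u (n+1) * q i))"
proof -
  have zf: "z u = (\<lambda>i. mink n q u * e0 i - u (n+1) * q i)" if u: "sv n u" for u
    using zgen[OF u] M0[OF minkvec_Wp] by simp
  have qnz: "q \<noteq> (\<lambda>_. 0)"
  proof
    assume q0: "q = (\<lambda>_. 0)"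
    have "Z = (\<lambda>_ _. 0)"
    proof (rule mat_eq_units)
      show "supported n Z" using Zs by (simp add: so2n_def)
      show "supported n (\<lambda>_ _. 0)" by (simp add: supported_def)
      fix j assume "j \<le> n + 1"
      then show "z (unit j) = mvec n (\<lambda>_ _. 0) (unit j)"
        using zf[OF sv_unit] q0 by (simp add: mvec_zero_mat mink_zero)
    qed
    then show False using Znz by simp
  qed
  have qq: "mink n q q = 0"
  proof (rule ccontr)
    assume c: "mink n q q \<noteq> 0"
    define c where "c = mink n q q"
    have zq: "z q = (\<lambda>i. c * e0 i)" using zf[OF minkvec_sv[OF qW]] qbig by (simp add: c_def)
    have e0z: "e0 = z (\<lambda>i. (1 / c) * q i)"
    proof -
      have "z (\<lambda>i. (1 / c) * q i) = (\<lambda>i. (1 / c) * z q i)" by (rule mvec_scale)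
      then show ?thesis using zq c c_def by simp
    qed
    have qz: "q = z (\<lambda>i. (-1) * fv n i)"
    proof -
      have "z (\<lambda>i. (-1) * fv n i) = (\<lambda>i. (-1) * z (fv n) i)" by (rule mvec_scale)
      then show ?thesis using zfv by simp
    qed
    have span: "\<exists>a b. z v = (\<lambda>i. a * e0 i + b * q i)" if "sv n v" for v
      using zf[OF that] by (intro exI[of _ "mink n q v"] exI[of _ "- v (n+1)"]) auto
    have ind2: "a = 0 \<and> b = 0" if h: "\<forall>i. a * e0 i + b * q i = 0" for a b
    proof -
      have a: "a = 0" using h[rule_format, of 0] q0 by (simp add: e0_def)
      then have "\<forall>i. b * q i = 0" using h by simp
      then have "b = 0" using qnz by (auto simp: fun_eq_iff)
      with a show ?thesis by simp
    qed
    have g: "z e0 = (\<lambda>_. 0) \<and> z q = (\<lambda>_. 0)"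
    proof (rule H.G1[of e0 q])
      show "\<And>a b. \<forall>i. a * e0 i + b * q i = 0 \<Longrightarrow> a = 0 \<and> b = 0" using ind2 by blast
      show "\<exists>a b. x e0 = (\<lambda>i. a * e0 i + b * q i)"
        using span[of "x (\<lambda>i. 1 / c * q i)"] mvec_sv e0z H.cx by metis
      show "\<exists>a b. x q = (\<lambda>i. a * e0 i + b * q i)"
        using span[of "x (\<lambda>i. -1 * fv n i)"] mvec_sv qz H.cx by metis
      show "\<exists>a b. y e0 = (\<lambda>i. a * e0 i + b * q i)"
        using span[of "y (\<lambda>i. 1 / c * q i)"] mvec_sv e0z H.cy by metis
      show "\<exists>a b. y q = (\<lambda>i. a * e0 i + b * q i)"
        using span[of "y (\<lambda>i. -1 * fv n i)"] mvec_sv qz H.cy by metis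
    qed
    then have "(\<lambda>i. c * e0 i) = (\<lambda>_. 0)" using zq by simp
    then have "c = 0" by (auto simp: fun_eq_iff e0_def dest: spec[of _ 0])
    then show False using c c_def by simp
  qed
  show ?thesis using qnz qq zf by blast
qed

lemma sv_comb4: "sv n a \<Longrightarrow> sv n b \<Longrightarrow> sv n c \<Longrightarrow> sv n d \<Longrightarrow>
   sv n (\<lambda>i. p1 * a i + p2 * b i + p3 * c i + p4 * d i)"
  by (auto simp: sv_def)

lemma caseB:
  assumes w1: "minkvec n w1" and nz1: "M w1 \<noteq> (\<lambda>_. 0)"
  shows False
proof -
  obtain u1 where u1: "minkvec n u1" "M (M u1) \<noteq> (\<lambda>_. 0)"
    using S.sq0 w1 nz1 by blast
  obtain l w0 m where lW: "minkvec n l" and lnz: "l \<noteq> (\<lambda>_. 0)" and ll: "mink n l l = 0"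
    and w0W: "minkvec n w0" and lw0: "mink n l w0 = 1" and mW: "minkvec n m"
    and ml: "mink n m l = 0" and mw0: "mink n m w0 = 0" and mm: "mink n m m \<noteq> 0"
    and Mf: "\<And>w. minkvec n w \<Longrightarrow> M w = (\<lambda>i. mink n l w * m i - mink n m w * l i)"
    using S.cube_struct[OF M3 u1] by blast
  have lm: "mink n l m = 0" using ml by (simp add: mink_sym)
  have w0l: "mink n w0 l = 1" using lw0 by (simp add: mink_sym)
  have w0m: "mink n w0 m = 0" using mw0 by (simp add: mink_sym)
  have svl: "sv n l" and svm: "sv n m" and svq: "sv n q" and svw0: "sv n w0"
    using lW mW qW w0W by (simp_all add: minkvec_sv)
  have l0: "l 0 = 0" and m0: "m 0 = 0" and w00: "w0 0 = 0"
    using lW mW w0W by (simp_all add: minkvec_0)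
  have l1: "l (n+1) = 0" and m1: "m (n+1) = 0" and q1: "q (n+1) = 0" and w01: "w0 (n+1) = 0"
    using lW mW qW w0W by (simp_all add: minkvec_big)
  have e01: "e0 (n+1) = 0" by (simp add: e0_def)
  have me: "mink n v e0 = 0" for v using mink_e0'[OF n3] .
  define comb where "comb a b c d = (\<lambda>i. a * e0 i + b * l i + c * m i + d * q i)" for a b c d
  have ZF: "z u = comb (mink n q u) (- mink n m u) (mink n l u) (- u (n+1))" if u: "sv n u" for u
  proof -
    have h1: "M (Wp n u) = (\<lambda>i. mink n l u * m i - mink n m u * l i)"
      using Mf[OF minkvec_Wp] by (simp add: mink_Wp2[OF n3])
    show ?thesis unfolding comb_def zgen[OF u] h1 by (rule ext) (simp add: algebra_simps)
  qed
  have svc: "sv n (comb a b c d)" for a b c d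
    unfolding comb_def by (rule sv_comb4[OF sv_e0 svl svm svq])
  have zc: "z (comb a b c d) = comb (b * mink n q l + c * mink n q m + d * mink n q q)
       (- c * mink n m m - d * mink n m q) (d * mink n l q) 0" for a b c d
  proof -
    have "z (comb a b c d) = comb (mink n q (comb a b c d)) (- mink n m (comb a b c d))
       (mink n l (comb a b c d)) (- comb a b c d (n+1))" by (rule ZF[OF svc])
    also have "\<dots> = comb (b * mink n q l + c * mink n q m + d * mink n q q)
       (- c * mink n m m - d * mink n m q) (d * mink n l q) 0"
      unfolding comb_def using me l1 m1 q1 e01 ll lm ml
      by (simp add: mink_add2 mink_scale2 mink_sym[of n l q])
    finally show ?thesis .
  qed
  have xspan: "\<exists>v. sv n v \<and> x ((z ^^ k) u) = (z ^^ k) v" for k u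
    using xz_comm mvec_sv by blast
  have yspan: "\<exists>v. sv n v \<and> y ((z ^^ k) u) = (z ^^ k) v" for k u
    using yz_comm mvec_sv by blast
  have z3: "z (z (z u)) = (z ^^ 3) u" for u by (simp add: numeral_3_eq_3)
  have zw0: "z w0 = comb (mink n q w0) 0 1 0"
    using ZF[OF svw0] w01 lw0 mw0 by simp
  show False
  proof (cases "mink n q l = 0")
    case False
    define K where "K = - mink n m m * mink n q l"
    have K: "K \<noteq> 0" using False mm by (simp add: K_def)
    have Z3: "(z ^^ 3) u = comb (K * mink n l u) (- K * u (n+1)) 0 0" if u: "sv n u" for u
    proof -
      have "(z ^^ 3) u = z (z (z u))" by (simp add: z3)
      also have "\<dots> = comb (K * mink n l u) (- K * u (n+1)) 0 0"
        unfolding ZF[OF u] zc using lm mink_sym[of n m q] by (simp add: K_def mink_sym[of n l q] algebra_simps)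
      finally show ?thesis .
    qed
    have spanA: "\<exists>a b. (z ^^ 3) v = (\<lambda>i. a * e0 i + b * l i)" if "sv n v" for v
      using Z3[OF that] by (intro exI[of _ "K * mink n l v"] exI[of _ "- K * v (n+1)"]) (simp add: comb_def)
    have e0z: "e0 = (z ^^ 3) (\<lambda>i. (1 / K) * w0 i)"
    proof -
      have "sv n (\<lambda>i. (1 / K) * w0 i)" using svw0 by (auto simp: sv_def)
      from Z3[OF this] show ?thesis using K w01 lw0 by (simp add: comb_def mink_scale2 mink_div2 mink_neg2)
    qed
    have lz: "l = (z ^^ 3) (\<lambda>i. (-1 / K) * fv n i)"
    proof -
      have "sv n (\<lambda>i. (-1 / K) * fv n i)" using sv_fv by (auto simp: sv_def)
      moreover have "fv n (n+1) = 1" by (simp add: fv_def)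
      ultimately show ?thesis using K Z3 by (simp add: comb_def mink_scale2 mink_div2 mink_neg2 mink_fv'[OF n3])
    qed
    have g: "z e0 = (\<lambda>_. 0) \<and> z l = (\<lambda>_. 0)"
    proof (rule H.G1[of e0 l])
      show "\<And>a b. \<forall>i. a * e0 i + b * l i = 0 \<Longrightarrow> a = 0 \<and> b = 0"
      proof -
        fix a b assume h: "\<forall>i. a * e0 i + b * l i = 0"
        have a: "a = 0" using h[rule_format, of 0] l0 by (simp add: e0_def)
        then have "\<forall>i. b * l i = 0" using h by simp
        then have "b = 0" using lnz by (auto simp: fun_eq_iff)
        with a show "a = 0 \<and> b = 0" by simp
      qed
      show "\<exists>a b. x e0 = (\<lambda>i. a * e0 i + b * l i)"
        using xspan[of 3 "\<lambda>i. (1 / K) * w0 i"] spanA e0z by metis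
      show "\<exists>a b. x l = (\<lambda>i. a * e0 i + b * l i)"
        using xspan[of 3 "\<lambda>i. (-1 / K) * fv n i"] spanA lz by metis
      show "\<exists>a b. y e0 = (\<lambda>i. a * e0 i + b * l i)"
        using yspan[of 3 "\<lambda>i. (1 / K) * w0 i"] spanA e0z by metis
      show "\<exists>a b. y l = (\<lambda>i. a * e0 i + b * l i)"
        using yspan[of 3 "\<lambda>i. (-1 / K) * fv n i"] spanA lz by metis
    qed
    have "z l = comb (mink n q l) 0 0 0"
      using ZF[OF svl] ll ml l1 by simp
    then have "mink n q l = 0" using g by (auto simp: comb_def fun_eq_iff e0_def dest: spec[of _ 0])
    then show False using False by simp
  next
    case True
    note ql = True
    have lq: "mink n l q = 0" using ql by (simp add: mink_sym)
    have mqs: "mink n m q = mink n q m" by (simp add: mink_sym)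
    have q0': "q 0 = 0" by (rule q0)
    have zq: "z q = comb (mink n q q) (- mink n q m) 0 0"
      using ZF[OF svq] q1 lq mqs by simp
    have zzw0: "z (z w0) = comb (mink n q m) (- mink n m m) 0 0"
      unfolding zw0 zc using ql by simp
    have zzzw0: "z (z (z w0)) = (\<lambda>_. 0)"
      unfolding zzw0 zc using ql by (simp add: comb_def)
    have zzq: "z (z q) = (\<lambda>_. 0)"
      unfolding zq zc using ql by (simp add: comb_def)
    have qz: "q = z (\<lambda>i. (-1) * fv n i)"
    proof -
      have "z (\<lambda>i. (-1) * fv n i) = (\<lambda>i. (-1) * z (fv n) i)" by (rule mvec_scale)
      then show ?thesis using zfv by simp
    qed
    have svxw: "sv n (x v)" "sv n (y v)" for v by (rule mvec_sv)+
    define D where "D = mink n q m ^ 2 - mink n m m * mink n q q"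
    show False
    proof (cases "D = 0")
      case False
      note Dnz = False
      have span4: "\<exists>a b c d. z u = (\<lambda>i. a * z w0 i + b * q i + c * z (z w0) i + d * z q i)" if u: "sv n u" for u
      proof -
        define E where "E = mink n q u - mink n l u * mink n q w0"
        define C where "C = (E * mink n q m - mink n q q * mink n m u) / D"
        define Dd where "Dd = (mink n q m * mink n m u - E * mink n m m) / D"
        have h1: "C * mink n q m + Dd * mink n q q = E"
          using cramer1[OF D_def Dnz] unfolding C_def Dd_def .
        have h2: "C * mink n m m + Dd * mink n q m = mink n m u"
          using cramer2[OF D_def Dnz] unfolding C_def Dd_def .
        have e1: "mink n q u = mink n l u * mink n q w0 + C * mink n q m + Dd * mink n q q"
          using h1 unfolding E_def by simp
        have e2: "mink n m u = C * mink n m m + Dd * mink n q m" using h2 by simp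
        show ?thesis
          by (intro exI[of _ "mink n l u"] exI[of _ "- u (n+1)"] exI[of _ C] exI[of _ Dd])
             (subst zzw0, unfold ZF[OF u] zw0 zq comb_def, rule ext, simp only: e1 e2, simp add: algebra_simps)
      qed
      show False
      proof (rule H.G2[of "z w0" q])
        show "z (z (z w0)) = (\<lambda>_. 0)" by (rule zzzw0)
        show "z (z q) = (\<lambda>_. 0)" by (rule zzq)
        show "a = 0 \<and> b = 0 \<and> c = 0 \<and> d = 0"
          if h: "\<forall>i. a * z w0 i + b * q i + c * z (z w0) i + d * z q i = 0" for a b c d
        proof -
          define V where "V = (\<lambda>i. a * z w0 i + b * q i + c * z (z w0) i + d * z q i)"
          have V0: "V = (\<lambda>_. 0)" using h by (auto simp: V_def)
          have Vf: "V = (\<lambda>i. a * (mink n q w0 * e0 i + m i) + b * q i + c * (mink n q m * e0 i - mink n m m * l i)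
                     + d * (mink n q q * e0 i - mink n q m * l i))"
            unfolding V_def by (subst zzw0, unfold zw0 zq comb_def, simp add: algebra_simps)
          have "mink n m V = 0" using V0 by (simp add: mink_zero)
          then have eq1: "mink n m m * a + mink n q m * b = 0"
            unfolding Vf using me ml by (simp add: mink_add2 mink_diff2 mink_scale2 mink_scale2r mqs algebra_simps)
          have "mink n q V = 0" using V0 by (simp add: mink_zero)
          then have eq2: "mink n q m * a + mink n q q * b = 0"
            unfolding Vf using me ql by (simp add: mink_add2 mink_diff2 mink_scale2 mink_scale2r mink_sym[of n q m] algebra_simps)
          have ab: "a = 0 \<and> b = 0"
          proof (rule lin2[OF eq1 eq2])
            show "mink n m m * mink n q q - mink n q m * mink n q m \<noteq> 0"
              using Dnz by (simp add: D_def power2_eq_square)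
          qed
          have "mink n w0 V = 0" using V0 by (simp add: mink_zero)
          then have eq3: "(- mink n m m) * c + (- mink n q m) * d = 0"
            unfolding Vf using me ab w0l by (simp add: mink_add2 mink_diff2 mink_scale2 mink_scale2r algebra_simps)
          have "V 0 = 0" using V0 by simp
          then have eq4: "mink n q m * c + mink n q q * d = 0"
            unfolding Vf using ab l0 m0 q0' by (simp add: e0_def mult.commute)
          have cd: "c = 0 \<and> d = 0"
          proof (rule lin2[OF eq3 eq4])
            show "- mink n m m * mink n q q - - mink n q m * mink n q m \<noteq> 0"
              using Dnz by (simp add: D_def power2_eq_square)
          qed
          show ?thesis using ab cd by simp
        qed
        show "\<exists>a b c d. x (z w0) = (\<lambda>i. a * z w0 i + b * q i + c * z (z w0) i + d * z q i)"
          using H.cx[of w0] span4[OF svxw(1)] by metis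
        show "\<exists>a b c d. x q = (\<lambda>i. a * z w0 i + b * q i + c * z (z w0) i + d * z q i)"
          using H.cx[of "\<lambda>i. (-1) * fv n i"] qz span4[OF svxw(1)] by metis
        show "\<exists>a b c d. y (z w0) = (\<lambda>i. a * z w0 i + b * q i + c * z (z w0) i + d * z q i)"
          using H.cy[of w0] span4[OF svxw(2)] by metis
        show "\<exists>a b c d. y q = (\<lambda>i. a * z w0 i + b * q i + c * z (z w0) i + d * z q i)"
          using H.cy[of "\<lambda>i. (-1) * fv n i"] qz span4[OF svxw(2)] by metis
      qed
    next
      case True
      note D0 = True
      define \<beta> where "\<beta> = mink n q m / mink n m m"
      define q' where "q' = (\<lambda>i. q i - \<beta> * m i)"
      have q'W: "minkvec n q'" using qW mW by (auto simp: q'_def minkvec_def)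
      have "mink n q' q' = mink n q q - 2 * \<beta> * mink n q m + \<beta> ^ 2 * mink n m m"
        unfolding q'_def by (simp add: mink_diff mink_diff2 mink_scale mink_scale2 mqs power2_eq_square algebra_simps)
      also have "\<dots> = - D / mink n m m" using mm unfolding \<beta>_def D_def
        by (simp add: field_simps power2_eq_square)
      finally have q'q': "mink n q' q' = 0" using D0 by simp
      have lq': "mink n l q' = 0" unfolding q'_def using lq lm by (simp add: mink_diff2 mink_scale2)
      obtain \<alpha> where al: "q' = (\<lambda>i. \<alpha> * l i)" using L1[OF n3 lW q'W ll q'q' lq' lnz] by blast
      have qf: "q i = \<alpha> * l i + \<beta> * m i" for i using fun_cong[OF al, of i] by (simp add: q'_def)
      have qlin: "mink n q v = \<alpha> * mink n l v + \<beta> * mink n m v" for v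
      proof -
        have "q = (\<lambda>i. \<alpha> * l i + \<beta> * m i)" using qf by auto
        then show ?thesis by (simp add: mink_lin)
      qed
      have qw0: "mink n q w0 = \<alpha>" using qlin[of w0] lw0 mw0 by simp
      have qm: "mink n q m = \<beta> * mink n m m" using qlin[of m] lm by simp
      have span2: "\<exists>a b. z u = (\<lambda>i. a * z w0 i + b * z (z w0) i)" if u: "sv n u" for u
      proof -
        define c1 where "c1 = (mink n m u + u (n+1) * \<alpha>) / mink n m m"
        have hc1: "c1 * mink n m m = mink n m u + u (n+1) * \<alpha>" using mm by (simp add: c1_def)
        show ?thesis
          by (intro exI[of _ "mink n l u - u (n+1) * \<beta>"] exI[of _ c1])
             (subst zzw0, unfold ZF[OF u] zw0 comb_def, rule ext,
              simp only: qlin qf, simp add: lw0 mw0 lm c1_def field_simps mm)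
      qed
      have g: "z (z w0) = (\<lambda>_. 0) \<and> z (z (z w0)) = (\<lambda>_. 0)"
      proof (rule H.G1[of "z w0" "z (z w0)"])
        show "a = 0 \<and> b = 0" if h: "\<forall>i. a * z w0 i + b * z (z w0) i = 0" for a b
        proof -
          define V where "V = (\<lambda>i. a * z w0 i + b * z (z w0) i)"
          have V0: "V = (\<lambda>_. 0)" using h by (auto simp: V_def)
          have Vf: "V = (\<lambda>i. a * (mink n q w0 * e0 i + m i) + b * (mink n q m * e0 i - mink n m m * l i))"
            unfolding V_def by (subst zzw0, unfold zw0 comb_def, simp add: algebra_simps)
          have "mink n m V = 0" using V0 by (simp add: mink_zero)
          then have "mink n m m * a = 0"
            unfolding Vf using me ml by (simp add: mink_add2 mink_diff2 mink_scale2 mink_scale2r algebra_simps)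
          then have a: "a = 0" using mm by simp
          have "mink n w0 V = 0" using V0 by (simp add: mink_zero)
          then have "mink n m m * b = 0"
            unfolding Vf using me w0l w0m a by (simp add: mink_add2 mink_diff2 mink_scale2 mink_scale2r algebra_simps)
          then have "b = 0" using mm by simp
          with a show ?thesis by simp
        qed
        show "\<exists>a b. x (z w0) = (\<lambda>i. a * z w0 i + b * z (z w0) i)"
          using H.cx[of w0] span2[OF svxw(1)] by metis
        show "\<exists>a b. x (z (z w0)) = (\<lambda>i. a * z w0 i + b * z (z w0) i)"
          using H.cx[of "z w0"] span2[OF svxw(1)] by metis
        show "\<exists>a b. y (z w0) = (\<lambda>i. a * z w0 i + b * z (z w0) i)"
          using H.cy[of w0] span2[OF svxw(2)] by metis
        show "\<exists>a b. y (z (z w0)) = (\<lambda>i. a * z w0 i + b * z (z w0) i)"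
          using H.cy[of "z w0"] span2[OF svxw(2)] by metis
      qed
      then have "comb (mink n q m) (- mink n m m) 0 0 = (\<lambda>_. 0)" using zzw0 by simp
      then have "mink n w0 (comb (mink n q m) (- mink n m m) 0 0) = 0" by (simp add: mink_zero)
      then have "mink n m m = 0" unfolding comb_def using me w0l
        by (simp add: mink_add2 mink_diff2 mink_scale2 mink_scale2r)
      then show False using mm by simp
    qed
  qed
qed

lemma Zform:
  assumes Znz: "Z \<noteq> (\<lambda>_ _. 0)"
  shows "q \<noteq> (\<lambda>_. 0) \<and> mink n q q = 0 \<and> (\<forall>u. sv n u \<longrightarrow> z u = (\<lambda>i. mink n q u * e0 i - u (n+1) * q i))"
proof (cases "\<forall>w. minkvec n w \<longrightarrow> M w = (\<lambda>_. 0)")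
  case True then show ?thesis using caseA Znz by blast
next
  case False then obtain w1 where "minkvec n w1" "M w1 \<noteq> (\<lambda>_. 0)" by blast
  with caseB show ?thesis by blast
qed

end




declare sum.atMost_Suc[simp del]

lemma mink_e0r: "3 \<le> n \<Longrightarrow> mink n w e0 = 0"
  using mink_e0 mink_sym by metis

lemma Bf_units: assumes n: "3 \<le> n"
  shows "Bf n r u = (\<Sum>j\<le>n+1. Bf n r (unit j) * u j)"
proof -
  have bu: "Bf n r (unit j) = (\<Sum>i\<le>n+1. r i * Jm n i j)" if j: "j \<le> n + 1" for j
  proof -
    have "Bf n r (unit j) = (\<Sum>i\<le>n+1. r i * (\<Sum>k\<le>n+1. Jm n i k * unit j k))" by (rule Bf_sum[OF n])
    also have "\<dots> = (\<Sum>i\<le>n+1. r i * Jm n i j)"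
    proof (rule sum.cong[OF refl])
      fix i
      have "(\<Sum>k\<le>n+1. Jm n i k * unit j k) = Jm n i j * unit j j"
        by (rule sum_single) (use j in \<open>auto simp: unit_def\<close>)
      then show "r i * (\<Sum>k\<le>n+1. Jm n i k * unit j k) = r i * Jm n i j" by (simp add: unit_def)
    qed
    finally show ?thesis .
  qed
  have "Bf n r u = (\<Sum>i\<le>n+1. (\<Sum>j\<le>n+1. Jm n i j * u j) * r i)"
    by (simp add: Bf_sum[OF n] mult.commute)
  also have "\<dots> = (\<Sum>j\<le>n+1. u j * (\<Sum>i\<le>n+1. Jm n i j * r i))" by (rule sum_swap_lemma)
  also have "\<dots> = (\<Sum>j\<le>n+1. Bf n r (unit j) * u j)"
    by (rule sum.cong[OF refl]) (simp add: bu mult.commute)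
  finally show ?thesis .
qed

lemma mmul_col: "i \<le> n + 1 \<Longrightarrow> j \<le> n + 1 \<Longrightarrow> mmul n A B i j = mvec n A (mvec n B (unit j)) i"
  by (metis mvec_mmul mvec_unit)

lemma col_eq: assumes "supported n g" "j \<le> n + 1" shows "(\<lambda>a. g a j) = mvec n g (unit j)"
proof
  fix a show "g a j = mvec n g (unit j) a"
    using assms mvec_unit[of a n j g] by (cases "a \<le> n + 1") (auto simp: supported_def mvec_def)
qed

lemma Jm_Bf: assumes n: "3 \<le> n" "i \<le> n + 1" "j \<le> n + 1"
  shows "Jm n i j = Bf n (unit i) (unit j)"
proof -
  have "Bf n (unit i) (unit j) = (\<Sum>a\<le>n+1. unit i a * (\<Sum>b\<le>n+1. Jm n a b * unit j b))" by (rule Bf_sum[OF n(1)])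
  also have "\<dots> = unit i i * (\<Sum>b\<le>n+1. Jm n i b * unit j b)"
    by (rule sum_single) (use n in \<open>auto simp: unit_def\<close>)
  also have "(\<Sum>b\<le>n+1. Jm n i b * unit j b) = Jm n i j * unit j j"
    by (rule sum_single) (use n in \<open>auto simp: unit_def\<close>)
  finally show ?thesis by (simp add: unit_def)
qed

lemma Jm_out: "3 \<le> n \<Longrightarrow> \<not> (i \<le> n + 1 \<and> j \<le> n + 1) \<Longrightarrow> Jm n i j = 0"
  by (auto simp: Jm_def)

lemma O2n_of_Bf:
  assumes n: "3 \<le> n" and sg: "supported n g"
    and pres: "\<And>u v. sv n u \<Longrightarrow> sv n v \<Longrightarrow> Bf n (mvec n g u) (mvec n g v) = Bf n u v"
  shows "g \<in> O2n n"
  unfolding O2n_def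
proof (intro CollectI conjI sg ext)
  fix i j
  show "mmul n (mtransp g) (mmul n (Jm n) g) i j = Jm n i j"
  proof (cases "i \<le> n + 1 \<and> j \<le> n + 1")
    case True
    have "mmul n (mtransp g) (mmul n (Jm n) g) i j = (\<Sum>a\<le>n+1. g a i * (\<Sum>b\<le>n+1. Jm n a b * g b j))"
      using True by (auto simp: mmul_def mtransp_def intro!: sum.cong)
    also have "\<dots> = Bf n (\<lambda>a. g a i) (\<lambda>b. g b j)" by (simp add: Bf_sum[OF n])
    also have "\<dots> = Bf n (mvec n g (unit i)) (mvec n g (unit j))"
      using col_eq[OF sg] True by simp
    also have "\<dots> = Bf n (unit i) (unit j)" using pres sv_unit True by simp
    also have "\<dots> = Jm n i j" using Jm_Bf[OF n] True by simp
    finally show ?thesis .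
  next
    case False then show ?thesis using Jm_out[OF n] by (auto simp: mmul_def)
  qed
qed

definition Gop :: "nat \<Rightarrow> (nat \<Rightarrow> real) \<Rightarrow> real \<Rightarrow> (nat \<Rightarrow> real) \<Rightarrow> nat \<Rightarrow> real" where
  "Gop n r k u = (\<lambda>i. u i - k * mink n r u * r i)"

definition gmat :: "nat \<Rightarrow> (nat \<Rightarrow> real) \<Rightarrow> real \<Rightarrow> nat \<Rightarrow> nat \<Rightarrow> real" where
  "gmat n r k = (\<lambda>i j. if i \<le> n + 1 \<and> j \<le> n + 1 then unit j i - k * mink n r (unit j) * r i else 0)"

locale refl_data =
  fixes n :: nat and r :: "nat \<Rightarrow> real" and k :: real
  assumes n3: "3 \<le> n" and rW: "minkvec n r" and kc: "k = 0 \<or> k * mink n r r = 2"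
begin

abbreviation "G \<equiv> Gop n r k"
abbreviation "g \<equiv> gmat n r k"

lemma r0: "r 0 = 0" and r1: "r (n+1) = 0" and rbig: "n + 1 < i \<Longrightarrow> r i = 0"
  using rW by (auto simp: minkvec_def)

lemma mink_r_units: "mink n r u = (\<Sum>j\<le>n+1. mink n r (unit j) * u j)"
  using Bf_units[OF n3, of r u] by (simp add: Bf_W[OF rW])

lemma mvec_g: "sv n u \<Longrightarrow> mvec n g u = G u"
proof
  fix i assume u: "sv n u"
  show "mvec n g u i = G u i"
  proof (cases "i \<le> n + 1")
    case True
    have "mvec n g u i = (\<Sum>j\<le>n+1. unit j i * u j - k * r i * (mink n r (unit j) * u j))"
      using True by (auto simp: mvec_def gmat_def algebra_simps intro!: sum.cong)
    also have "\<dots> = (\<Sum>j\<le>n+1. unit j i * u j) - k * r i * (\<Sum>j\<le>n+1. mink n r (unit j) * u j)"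
      by (simp only: sum_subtractf sum_distrib_left)
    also have "(\<Sum>j\<le>n+1. unit j i * u j) = unit i i * u i"
      by (rule sum_single) (use True in \<open>auto simp: unit_def\<close>)
    finally have "mvec n g u i = unit i i * u i - k * r i * (\<Sum>j\<le>n+1. mink n r (unit j) * u j)" .
    then show ?thesis by (simp only: mink_r_units[symmetric]) (simp add: Gop_def unit_def)
  next
    case False
    then show ?thesis using u rbig by (simp add: mvec_def Gop_def sv_def)
  qed
qed

lemma supp_g: "supported n g" by (auto simp: supported_def gmat_def)

lemma G_sv: "sv n u \<Longrightarrow> sv n (G u)" using rbig by (auto simp: sv_def Gop_def)

lemma mink_rG: "mink n r (G u) = mink n r u - k * mink n r u * mink n r r"
  unfolding Gop_def by (simp only: mink_diff2 mink_scale2)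

lemma G_inv: "G (G u) = u"
proof
  fix i
  have h: "G (G u) = (\<lambda>i. G u i - k * mink n r (G u) * r i)" by (rule Gop_def)
  have "G (G u) i = u i - k * mink n r u * (2 - k * mink n r r) * r i"
    unfolding h mink_rG by (simp add: Gop_def algebra_simps)
  then show "G (G u) i = u i" using kc by auto
qed

lemma G_Bf: "Bf n (G u) (G v) = Bf n u v"
proof -
  have m: "mink n (G u) (G v) = mink n u v + k * mink n r u * mink n r v * (k * mink n r r - 2)"
    unfolding Gop_def
    by (simp only: mink_diff mink_diff2 mink_scale mink_scale2)
       (simp add: mink_sym[of n u r] mink_sym[of n v r] algebra_simps)
  have "k * mink n r u * mink n r v * (k * mink n r r - 2) = 0" using kc by auto
  then show ?thesis using m r0 r1 by (simp add: Bf_def Gop_def)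
qed

lemma G_e0: "G e0 = e0" by (simp add: Gop_def mink_e0r[OF n3])

lemma g_P: "g \<in> Pgrp n"
  unfolding Pgrp_def
proof (intro CollectI conjI allI impI)
  show "g \<in> O2n n"
    by (rule O2n_of_Bf[OF n3 supp_g]) (simp add: mvec_g G_Bf)
  fix i assume "1 \<le> i \<and> i \<le> n + 1"
  moreover have "mink n r (unit 0) = 0" using mink_e0r[OF n3, of r] by (simp add: unit_def e0_def)
  ultimately show "g i 0 = 0" by (simp add: gmat_def unit_def)
qed

lemma G_lin: "G (\<lambda>i. a * u i - b * v i) = (\<lambda>i. a * G u i - b * G v i)"
  unfolding Gop_def by (simp only: mink_diff2 mink_scale2) (simp add: fun_eq_iff algebra_simps)

lemma G_r1: "G u (n+1) = u (n+1)" using r1 by (simp add: Gop_def)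

lemma gg: "mmul n g g = idm n"
proof (intro ext)
  fix i j
  show "mmul n g g i j = idm n i j"
  proof (cases "i \<le> n + 1 \<and> j \<le> n + 1")
    case True
    then have "mmul n g g i j = G (G (unit j)) i"
      using mmul_col[of i n j g g] mvec_g sv_unit G_sv by simp
    then show ?thesis using True by (simp add: G_inv idm_def unit_def)
  qed (auto simp: mmul_def idm_def)
qed

end

lemma Bf_diff: "Bf n (\<lambda>i. a * u i - b * v i) w = a * Bf n u w - b * Bf n v w"
  using Bf_lin[of n a u "-b" v w] by simp

lemma Bf_scale: "Bf n (\<lambda>i. a * u i) w = a * Bf n u w"
  using Bf_lin[of n a u 0 u w] by simp

lemma cartan_left: "i \<le> n + 1 \<Longrightarrow> j \<le> n + 1 \<Longrightarrow> mmul n (cartanH n l m) A i j = cartanH n l m i i * A i j"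
proof -
  assume i: "i \<le> n + 1" and j: "j \<le> n + 1"
  have "(\<Sum>k\<le>n+1. cartanH n l m i k * A k j) = cartanH n l m i i * A i j"
    by (rule sum_single) (use i in \<open>auto simp: cartanH_def\<close>)
  then show ?thesis using i j by (simp add: mmul_def)
qed

lemma cartan_right: "i \<le> n + 1 \<Longrightarrow> j \<le> n + 1 \<Longrightarrow> mmul n A (cartanH n l m) i j = A i j * cartanH n l m j j"
proof -
  assume i: "i \<le> n + 1" and j: "j \<le> n + 1"
  have "(\<Sum>k\<le>n+1. A i k * cartanH n l m k j) = A i j * cartanH n l m j j"
    by (rule sum_single) (use j in \<open>auto simp: cartanH_def\<close>)
  then show ?thesis using i j by (simp add: mmul_def)
qed

lemma root_space_of:
  assumes n3: "3 \<le> n" and sA: "supported n A"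
    and Af: "\<And>u. sv n u \<Longrightarrow> mvec n A u = (\<lambda>i. c * u n * e0 i - c * u (n+1) * unit 1 i)"
  shows "A \<in> root_space_ab n"
  unfolding root_space_ab_def
proof (intro CollectI conjI allI)
  have u1W: "minkvec n (unit 1)" using n3 by (auto simp: minkvec_def unit_def)
  have Bfu1: "Bf n (unit 1) v = v n" for v
    using Bf_W(1)[OF u1W, of v] mink_unit_1[OF n3, of v] by (simp add: mink_sym)
  have BfA: "Bf n (mvec n A u) v = c * u n * v (n+1) - c * u (n+1) * v n" if u: "sv n u" for u v
  proof -
    have "Bf n (mvec n A u) v = Bf n (\<lambda>i. (c * u n) * e0 i - (c * u (n+1)) * unit 1 i) v"
      using Af[OF u] by simp
    also have "\<dots> = c * u n * Bf n e0 v - c * u (n+1) * Bf n (unit 1) v" by (rule Bf_diff)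
    moreover have "Bf n (unit (Suc 0)) v = v n" using Bfu1 by simp
    ultimately show ?thesis by (simp add: Bf_e0[OF n3])
  qed
  show "A \<in> so2n n"
  proof (rule so2n_of_skew[OF n3 sA])
    fix u v assume u: "sv n u" and v: "sv n v"
    show "Bf n (mvec n A u) v = - Bf n u (mvec n A v)"
      using BfA[OF u, of v] BfA[OF v, of u] Bf_sym[of n u "mvec n A v"] by simp
  qed
  fix l m
  show "bracket n (cartanH n l m) A = (\<lambda>i j. (l + m) * A i j)"
  proof (intro ext)
    fix i j
    show "bracket n (cartanH n l m) A i j = (l + m) * A i j"
    proof (cases "i \<le> n + 1 \<and> j \<le> n + 1")
      case True
      have Aij: "A i j = c * unit j n * e0 i - c * unit j (n+1) * unit 1 i"
        using Af[OF sv_unit, of j] True mvec_unit[of i n j A] by (metis (no_types, lifting))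
      have br: "bracket n (cartanH n l m) A i j = (cartanH n l m i i - cartanH n l m j j) * A i j"
        using True by (simp add: bracket_def cartan_left cartan_right algebra_simps)
      show ?thesis unfolding br Aij using n3
        by (auto simp: unit_def e0_def cartanH_def)
    next
      case False
      then show ?thesis using sA by (auto simp: bracket_def mmul_def supported_def)
    qed
  qed
qed

lemma Pconj:
  assumes n3: "3 \<le> n" and qW: "minkvec n q" and qnz: "q \<noteq> (\<lambda>_. 0)" and qq: "mink n q q = 0"
    and sZ: "supported n Z"
    and Zf: "\<And>u. sv n u \<Longrightarrow> mvec n Z u = (\<lambda>i. mink n q u * e0 i - u (n+1) * q i)"
  shows "\<exists>g\<in>Pgrp n. \<exists>ginv. mmul n g ginv = idm n \<and> supported n ginv \<and> mmul n (mmul n g Z) ginv \<in> root_space_ab n"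
proof -
  have u1W: "minkvec n (unit 1)" using n3 by (auto simp: minkvec_def unit_def)
  have qu1: "mink n q (unit 1) = q n" by (rule mink_unit_1[OF n3])
  have u1u1: "mink n (unit 1) (unit 1) = 0" using mink_unit_1[OF n3, of "unit 1"] n3 by (simp add: unit_def)
  obtain r k c where rd: "refl_data n r k" and Gq: "Gop n r k q = (\<lambda>i. c * unit 1 i)"
  proof (cases "q n = 0")
    case True
    have mid: "\<forall>i\<in>{2..n-1}. q i = 0" using mid_zero[OF n3 True qq] .
    have "q = (\<lambda>i. q 1 * unit 1 i)"
    proof
      fix i show "q i = q 1 * unit 1 i"
        using qW mid True n3 unfolding minkvec_def unit_def
        by (cases "i = 0 \<or> n < i"; cases "i = 1"; cases "i = n") auto
    qed
    moreover have "refl_data n (\<lambda>_. 0) 0" using n3 by unfold_locales (auto simp: minkvec_def)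
    ultimately show ?thesis using that[of "\<lambda>_. 0" 0 "q 1"] by (simp add: Gop_def)
  next
    case False
    define r where "r = (\<lambda>i. q i - unit 1 i)"
    have rW: "minkvec n r" using qW u1W by (auto simp: r_def minkvec_def)
    have rr: "mink n r r = - 2 * q n"
      unfolding r_def mink_diff mink_diff2 qq qu1 u1u1 mink_sym[of n "unit 1" q] by simp
    define k where "k = - 1 / q n"
    have kc: "k * mink n r r = 2" using False by (simp add: rr k_def)
    have rq: "mink n r q = - q n" unfolding r_def mink_diff qq qu1 mink_sym[of n "unit 1" q] by simp
    have "refl_data n r k" using n3 rW kc by unfold_locales auto
    moreover have "Gop n r k q = (\<lambda>i. 1 * unit 1 i)"
    proof -
      have "Gop n r k q = (\<lambda>i. q i - r i)" using False by (simp add: Gop_def rq k_def)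
      then show ?thesis by (simp add: r_def)
    qed
    ultimately show ?thesis using that by blast
  qed
  interpret R: refl_data n r k by (rule rd)
  define Z' where "Z' = mmul n (mmul n (gmat n r k) Z) (gmat n r k)"
  have Zq: "mink n q (Gop n r k u) = c * u n" for u
  proof -
    have "mink n q (Gop n r k u) = Bf n q (Gop n r k u)" by (simp add: Bf_W[OF qW])
    also have "\<dots> = Bf n (Gop n r k q) (Gop n r k (Gop n r k u))" by (simp add: R.G_Bf)
    also have "\<dots> = Bf n (\<lambda>i. c * unit 1 i) u" by (simp add: R.G_inv Gq)
    also have "\<dots> = c * Bf n (unit 1) u" by (rule Bf_scale)
    also have "Bf n (unit 1) u = u n"
      using Bf_W(1)[OF u1W, of u] mink_unit_1[OF n3, of u] by (simp add: mink_sym)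
    finally show ?thesis .
  qed
  have Z'f: "mvec n Z' u = (\<lambda>i. c * u n * e0 i - c * u (n+1) * unit 1 i)" if u: "sv n u" for u
  proof -
    have "mvec n Z' u = Gop n r k (mvec n Z (Gop n r k u))"
      unfolding Z'_def mvec_mmul using R.mvec_g[OF u] R.mvec_g[OF mvec_sv] by simp
    also have "mvec n Z (Gop n r k u) = (\<lambda>i. (c * u n) * e0 i - u (n+1) * q i)"
      using Zf[OF R.G_sv[OF u]] Zq R.G_r1 by simp
    also have "Gop n r k \<dots> = (\<lambda>i. (c * u n) * Gop n r k e0 i - u (n+1) * Gop n r k q i)"
      by (rule R.G_lin)
    finally show ?thesis by (simp add: R.G_e0 Gq algebra_simps)
  qed
  have sZ': "supported n Z'" unfolding Z'_def by (rule supported_mmul)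
  have "Z' \<in> root_space_ab n" by (rule root_space_of[OF n3 sZ' Z'f])
  then show ?thesis using R.g_P R.gg R.supp_g unfolding Z'_def by blast
qed




theorem proposition4p8:
  fixes n :: nat and X Y Z :: mat
  assumes "3 \<le> n"
    and "X \<in> so2n n" and "Y \<in> so2n n" and "Z \<in> so2n n"
    and "bracket n X Y = Z"
    and "bracket n X Z = (\<lambda>_ _. 0)" and "bracket n Y Z = (\<lambda>_ _. 0)"
    and "Z \<noteq> (\<lambda>_ _. 0)"
    and "Z \<in> palg n"
  shows "lightlike_translation n Z \<and>
         (\<exists>g \<in> Pgrp n. \<exists>ginv. mmul n g ginv = idm n \<and> supported n ginv \<and>
             mmul n (mmul n g Z) ginv \<in> root_space_ab n)"
proof -
  interpret S: setupZ n X Y Z by unfold_locales (use assms in auto)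
  note zf = S.Zform[OF assms(8)]
  define q where "q = qv n Z"
  have qW: "minkvec n q" using S.qW q_def by simp
  have qnz: "q \<noteq> (\<lambda>_. 0)" and qq: "mink n q q = 0"
    and Zf: "\<And>u. sv n u \<Longrightarrow> mvec n Z u = (\<lambda>i. mink n q u * e0 i - u (n+1) * q i)"
    using zf q_def by auto
  have n3: "3 \<le> n" by (rule assms(1))
  have q0: "q 0 = 0" and qbig: "\<And>i. n < i \<Longrightarrow> q i = 0" using qW by (auto simp: minkvec_def)
  show ?thesis
  proof
    show "lightlike_translation n Z"
      unfolding lightlike_translation_def
    proof (intro conjI exI[of _ "\<lambda>i. - q i"] allI impI)
      show "Z \<in> palg n" by (rule assms(9))
      show "minkvec n (\<lambda>i. - q i)" using qW by (auto simp: minkvec_def)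
      show "(\<lambda>i. - q i) \<noteq> (\<lambda>_. 0)" using qnz by (auto simp: fun_eq_iff)
      show "mink n (\<lambda>i. - q i) (\<lambda>i. - q i) = 0"
        using qq mink_scale[of n "-1" q] mink_scale2[of n _ "-1" q] by simp
      fix v assume v: "minkvec n v"
      define s where "s = stereo_lift n v"
      have svs: "sv n s" by (auto simp: sv_def s_def stereo_lift_def)
      have s1: "s (n+1) = 1" by (simp add: s_def stereo_lift_def)
      have x: "mvec n Z s = (\<lambda>i. mink n q s * e0 i - q i)" using Zf[OF svs] s1 by simp
      show "pullback_field n Z v = (\<lambda>i. - q i)"
      proof
        fix i
        show "pullback_field n Z v i = - q i"
          unfolding pullback_field_def Let_def s_def[symmetric] x
          using qbig q0 by (cases "i = 0") (auto simp: e0_def)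
      qed
    qed
    show "\<exists>g \<in> Pgrp n. \<exists>ginv. mmul n g ginv = idm n \<and> supported n ginv \<and>
             mmul n (mmul n g Z) ginv \<in> root_space_ab n"
      by (rule Pconj[OF n3 qW qnz qq supported_so[OF assms(4)] Zf])
  qed
qed


end
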